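(* As formal power series in $t$ with coefficients in symmetric functions, $$\sum_{n\ge0}\mathrm{SH}_n(x)\,t^{n+1}=\bigl(t\,K(x,-t)\bigr)^{\langle-1\rangle},$$ where $K(x,t)=\prod_i\frac{1+x_it}{1-x_it}$ and ${}^{\langle-1\rangle}$ denotes compositional inverse with respect to $t$.
   Context: Work in the ring $\Lambda_{\mathbb Q}$ of symmetric functions with rational coefficients in variables $x=(x_1,x_2,\dots)$; $p_k$ denotes the power sum. For $f\in\Lambda_{\mathbb Q}$, its shiftification $f(x/x)$ is obtained by writing $f$ as a polynomial in the power sums and substituting $p_{2i+1}\mapsto 2p_{2i+1}$ and $p_{2i}\mapsto 0$ for all $i\ge1$. A parking function of length $n$ is a sequence $(a_1,\dots,a_n)$ of positive integers whose weakly increasing rearrangement $b_1\le\cdots\le b_n$ satisfies $b_i\le i$ for all $i$. The symmetric group $S_n$ acts on the set of parking functions of length $n$ by permuting coordinates; $\mathrm{PF}_n$ denotes the Frobenius characteristic of this permutation representation ($\mathrm{PF}_0=1$). Define $\mathrm{SH}_n(x)=\mathrm{PF}_n(x/x)$. *)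

theory Defs
  imports Complex_Main "HOL-Library.Poly_Mapping" "HOL-Library.Multiset" "HOL-Library.FuncSet"
    "HOL-Combinatorics.Permutations" "HOL-Computational_Algebra.Formal_Power_Series"
begin

text \<open>Lambda_Q is modelled as the polynomial ring Q[p_1,p_2,...] in the power sums
 (which are algebraically independent generators of Lambda_Q): an element is a finitely
 supported map from partitions (multisets of positive integers) lambda to the
 coefficient of p_lambda = p_lambda1 * p_lambda2 * ... .  Multiplication of
 poly_mappings over the monoid (nat multiset, +) is exactly p_lambda * p_mu = p_(lambda+mu).\<close>

type_synonym symf = "nat multiset \<Rightarrow>\<^sub>0 rat"

definition sym_valid :: "symf \<Rightarrow> bool" where
  "sym_valid F \<longleftrightarrow> (\<forall>lam\<in>Poly_Mapping.keys F. 0 \<notin># lam)"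

definition pmon :: "nat multiset \<Rightarrow> symf" where
  "pmon lam = Poly_Mapping.single lam 1"

definition sc :: "rat \<Rightarrow> symf" where
  "sc c = Poly_Mapping.single {#} c"

definition psum :: "nat \<Rightarrow> symf" where
  "psum k = pmon {#k#}"

text \<open>Realisation in the variables x_1, x_2, ... (indexed by nat): coefficient of the
 monomial x^alpha (alpha a finitely supported exponent vector) in p_lambda, namely the
 number of ways to assign each part of lambda to a variable so that the exponents add up
 to alpha.\<close>
definition pmon_mcoeff :: "nat multiset \<Rightarrow> (nat \<Rightarrow>\<^sub>0 nat) \<Rightarrow> nat" where
  "pmon_mcoeff lam alpha =
     (let l = sorted_list_of_multiset lam in
      card {f \<in> {..<length l} \<rightarrow>\<^sub>E Poly_Mapping.keys alpha.
              \<forall>i. Poly_Mapping.lookup alpha i = (\<Sum>j | j < length l \<and> f j = i. l ! j)})"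

definition mexp :: "symf \<Rightarrow> (nat \<Rightarrow>\<^sub>0 nat) \<Rightarrow> rat" where
  "mexp F alpha = (\<Sum>lam\<in>Poly_Mapping.keys F.
                      Poly_Mapping.lookup F lam * of_nat (pmon_mcoeff lam alpha))"

text \<open>K(x,t) = prod_i (1 + x_i t)/(1 - x_i t) = prod_i (1 + 2 sum_{k>=1} x_i^k t^k):
 the coefficient of t^n is the symmetric function whose coefficient of x^alpha is
 2^(number of variables occurring in alpha) if |alpha| = n and 0 otherwise.\<close>
definition K_coeff :: "nat \<Rightarrow> symf" where
  "K_coeff n = (THE q. sym_valid q \<and>
      mexp q = (\<lambda>alpha. if (\<Sum>i\<in>Poly_Mapping.keys alpha. Poly_Mapping.lookup alpha i) = n
                         then 2 ^ card (Poly_Mapping.keys alpha) else 0))"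

definition K_fps :: "symf fps" where
  "K_fps = Abs_fps K_coeff"

definition parking :: "nat \<Rightarrow> nat list set" where
  "parking n = {a. length a = n \<and> (\<forall>x\<in>set a. 0 < x) \<and> (\<forall>i<n. sort a ! i \<le> i + 1)}"

definition pf_char :: "nat \<Rightarrow> (nat \<Rightarrow> nat) \<Rightarrow> nat" where
  "pf_char n \<sigma> = card {a \<in> parking n. \<forall>i<n. a ! (\<sigma> i) = a ! i}"

definition cyc :: "(nat \<Rightarrow> nat) \<Rightarrow> nat \<Rightarrow> nat set" where
  "cyc \<sigma> i = {(\<sigma> ^^ k) i | k. True}"

definition cycle_type :: "nat \<Rightarrow> (nat \<Rightarrow> nat) \<Rightarrow> nat multiset" where
  "cycle_type n \<sigma> = image_mset card (mset_set {cyc \<sigma> i | i. i < n})"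

definition PF :: "nat \<Rightarrow> symf" where
  "PF n = sc (1 / fact n) *
     (\<Sum>\<sigma> | \<sigma> permutes {..<n}. sc (of_nat (pf_char n \<sigma>)) * pmon (cycle_type n \<sigma>))"

text \<open>shiftification f(x/x): the ring endomorphism p_(2i+1) -> 2 p_(2i+1), p_(2i) -> 0\<close>
definition shiftify :: "symf \<Rightarrow> symf" where
  "shiftify F = (\<Sum>lam\<in>Poly_Mapping.keys F.
      sc (Poly_Mapping.lookup F lam * (if \<forall>k\<in>#lam. odd k then 2 ^ size lam else 0)) * pmon lam)"

definition SH :: "nat \<Rightarrow> symf" where
  "SH n = shiftify (PF n)"

end

theory Submission
  imports Defs "HOL-Library.Multiset_Order" "HOL-Combinatorics.Orbits"
begin

unbundle fps_syntax


abbreviation lk :: "symf \<Rightarrow> nat multiset \<Rightarrow> rat" where "lk \<equiv> Poly_Mapping.lookup"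

lemma pm_sum_singles: "F = (\<Sum>l\<in>Poly_Mapping.keys F. Poly_Mapping.single l (Poly_Mapping.lookup F l))"
proof (rule poly_mapping_eqI)
  fix k
  show "Poly_Mapping.lookup F k = Poly_Mapping.lookup (\<Sum>l\<in>Poly_Mapping.keys F. Poly_Mapping.single l (Poly_Mapping.lookup F l)) k"
    by (cases "k \<in> Poly_Mapping.keys F")
       (auto simp: lookup_sum lookup_single when_def in_keys_iff sum.delta')
qed

lemma lookup_single_mult:
  "Poly_Mapping.lookup (Poly_Mapping.single a c * (F::symf)) (a + b) = c * Poly_Mapping.lookup F b"
proof -
  have "Poly_Mapping.single a c * F = (\<Sum>l\<in>Poly_Mapping.keys F. Poly_Mapping.single (a + l) (c * Poly_Mapping.lookup F l))"
    by (subst pm_sum_singles[of F]) (simp add: sum_distrib_left mult_single)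
  also have "Poly_Mapping.lookup \<dots> (a + b) = c * Poly_Mapping.lookup F b"
    by (cases "b \<in> Poly_Mapping.keys F")
       (auto simp: lookup_sum lookup_single when_def in_keys_iff sum.delta')
  finally show ?thesis .
qed

lemma lookup_sc_mult [simp]: "lk (sc c * F) l = c * lk F l"
  using lookup_single_mult[of "{#}" c F l] by (simp add: sc_def)

lemma sc_mult: "sc a * sc b = sc (a * b)"
  by (simp add: sc_def mult_single)
lemma sc_add: "sc (a + b) = sc a + sc b"
  by (simp add: sc_def single_add)
lemma sc_diff: "sc (a - b) = sc a - sc b"
  by (simp add: sc_def single_diff)
lemma sc_1 [simp]: "sc 1 = 1"
  by (simp add: sc_def)
lemma sc_0 [simp]: "sc 0 = 0"
  by (simp add: sc_def)
lemma sc_of_nat: "sc (of_nat n) = of_nat n"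
  by (simp add: sc_def)
lemma sc_sum: "sc (sum f A) = (\<Sum>x\<in>A. sc (f x))"
  by (induction A rule: infinite_finite_induct) (auto simp: sc_add)
lemma sc_prod: "sc (prod f A) = (\<Prod>x\<in>A. sc (f x))"
  by (induction A rule: infinite_finite_induct) (auto simp: sc_mult[symmetric])
lemma sc_power: "sc (a ^ n) = sc a ^ n"
  by (induction n) (auto simp: sc_mult[symmetric])
lemma sc_inv_cancel: "(n::nat) \<noteq> 0 \<Longrightarrow> sc (1 / of_nat n) * (of_nat n * x) = x"
  by (simp add: sc_of_nat[symmetric] mult.assoc[symmetric] sc_mult)

lemma pmon_add: "pmon (a + b) = pmon a * pmon b"
  by (simp add: pmon_def mult_single)
lemma pmon_empty [simp]: "pmon {#} = 1"
  by (simp add: pmon_def)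
lemma sc_pmon: "sc c * pmon l = Poly_Mapping.single l c"
  by (simp add: sc_def pmon_def mult_single)

lemma lookup_pmon: "lk (pmon l) m = (if l = m then 1 else 0)"
  by (simp add: pmon_def lookup_single when_def)

lemma of_nat_cancel_symf: "(n::nat) \<noteq> 0 \<Longrightarrow> of_nat n * (x::symf) = of_nat n * y \<Longrightarrow> x = y"
  by (metis sc_inv_cancel)

definition wsh :: "nat multiset \<Rightarrow> rat" where
  "wsh l = (if \<forall>k\<in>#l. odd k then 2 ^ size l else 0)"

lemma lookup_shiftify: "lk (shiftify F) l = lk F l * wsh l"
proof -
  have "shiftify F = (\<Sum>m\<in>Poly_Mapping.keys F. Poly_Mapping.single m (lk F m * wsh m))"
    by (simp add: shiftify_def sc_pmon wsh_def)
  also have "lk \<dots> l = lk F l * wsh l"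
    by (cases "l \<in> Poly_Mapping.keys F")
       (auto simp: lookup_sum lookup_single when_def in_keys_iff sum.delta')
  finally show ?thesis .
qed

lemma shiftify_add: "shiftify (F + G) = shiftify F + shiftify G"
  by (rule poly_mapping_eqI) (simp add: lookup_shiftify lookup_add algebra_simps)
lemma shiftify_sc: "shiftify (sc c * F) = sc c * shiftify F"
  by (rule poly_mapping_eqI) (simp add: lookup_shiftify)
lemma shiftify_0: "shiftify 0 = 0"
  by (rule poly_mapping_eqI) (simp add: lookup_shiftify)
lemma shiftify_sum: "shiftify (sum f A) = (\<Sum>x\<in>A. shiftify (f x))"
  by (induction A rule: infinite_finite_induct) (auto simp: shiftify_add shiftify_0)
lemma shiftify_pmon: "shiftify (pmon l) = sc (wsh l) * pmon l"
  by (rule poly_mapping_eqI) (simp add: lookup_shiftify lookup_pmon)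


abbreviation lka :: "(nat \<Rightarrow>\<^sub>0 nat) \<Rightarrow> nat \<Rightarrow> nat" where "lka \<equiv> Poly_Mapping.lookup"

definition cntS :: "nat list \<Rightarrow> (nat \<Rightarrow>\<^sub>0 nat) \<Rightarrow> nat set \<Rightarrow> (nat \<Rightarrow> nat) set" where
  "cntS l \<alpha> S = {f \<in> {..<length l} \<rightarrow>\<^sub>E S.
      \<forall>i. lka \<alpha> i = (\<Sum>j | j < length l \<and> f j = i. l ! j)}"

lemma pmon_mcoeff_alt:
  "pmon_mcoeff lam \<alpha> = card (cntS (sorted_list_of_multiset lam) \<alpha> (Poly_Mapping.keys \<alpha>))"
  by (simp add: pmon_mcoeff_def cntS_def Let_def)

lemma sum_filter_conv: "(\<Sum>j | j < n \<and> f j = i. (g::nat \<Rightarrow> 'a::comm_monoid_add) j) = (\<Sum>j<n. if f j = i then g j else 0)"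
proof -
  have "{j. j < n \<and> f j = i} = {j\<in>{..<n}. f j = i}" by auto
  then show ?thesis using sum.inter_filter[of "{..<n}" g "\<lambda>j. f j = i"] by simp
qed

lemma finite_cntS: "finite S \<Longrightarrow> finite (cntS l \<alpha> S)"
  unfolding cntS_def by (rule finite_subset[OF _ finite_PiE[of "{..<length l}" "\<lambda>_. S"]]) auto

lemma cntS_super:
  assumes pos: "\<forall>x\<in>set l. 0 < x" and sub: "Poly_Mapping.keys \<alpha> \<subseteq> S"
  shows "cntS l \<alpha> S = cntS l \<alpha> (Poly_Mapping.keys \<alpha>)"
proof
  show "cntS l \<alpha> (Poly_Mapping.keys \<alpha>) \<subseteq> cntS l \<alpha> S"
    using sub unfolding cntS_def by (auto simp: PiE_iff)
next
  show "cntS l \<alpha> S \<subseteq> cntS l \<alpha> (Poly_Mapping.keys \<alpha>)"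
  proof
    fix f assume f: "f \<in> cntS l \<alpha> S"
    have "f j \<in> Poly_Mapping.keys \<alpha>" if j: "j < length l" for j
    proof -
      have "l ! j \<le> (\<Sum>j' | j' < length l \<and> f j' = f j. l ! j')"
        by (rule member_le_sum) (use j in auto)
      also have "\<dots> = lka \<alpha> (f j)" using f by (simp add: cntS_def)
      finally have "l ! j \<le> lka \<alpha> (f j)" .
      moreover have "0 < l ! j" using pos nth_mem[OF j] by blast
      ultimately show ?thesis by (auto simp: in_keys_iff)
    qed
    then show "f \<in> cntS l \<alpha> (Poly_Mapping.keys \<alpha>)" using f by (auto simp: cntS_def PiE_iff)
  qed
qed

lemma cntS_perm_le:
  assumes m: "mset l = mset l'" and S: "finite S"
  shows "card (cntS l' \<alpha> S) \<le> card (cntS l \<alpha> S)"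
proof -
  obtain p where p: "p permutes {..<length l'}" "permute_list p l' = l"
    using mset_eq_permutation[OF m] by blast
  have len: "length l = length l'" using p(2) by auto
  define n where "n = length l'"
  define \<Phi> where "\<Phi> g = (\<lambda>j. if j < n then g (p j) else undefined)" for g :: "nat \<Rightarrow> nat"
  have lj: "l ! j = l' ! p j" if "j < n" for j
  proof -
    have "permute_list p l' ! j = l' ! p j" using permute_list_nth[OF p(1), of j] that unfolding n_def by blast
    then show ?thesis using p(2) by simp
  qed
  have inj: "inj_on \<Phi> (cntS l' \<alpha> S)"
  proof
    fix g h assume g: "g \<in> cntS l' \<alpha> S" and h: "h \<in> cntS l' \<alpha> S" and e: "\<Phi> g = \<Phi> h"
    show "g = h"
    proof
      fix x
      show "g x = h x"
      proof (cases "x < n")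
        case True
        have "x \<in> p ` {..<n}" using permutes_image[OF p(1)] True n_def by simp
        then obtain j where "j < n" "p j = x" by auto
        then show ?thesis using fun_cong[OF e, of j] by (simp add: \<Phi>_def)
      next
        case False
        then show ?thesis using g h unfolding cntS_def PiE_iff n_def extensional_def by auto
      qed
    qed
  qed
  have img: "\<Phi> ` cntS l' \<alpha> S \<subseteq> cntS l \<alpha> S"
  proof
    fix f assume "f \<in> \<Phi> ` cntS l' \<alpha> S"
    then obtain g where g: "g \<in> cntS l' \<alpha> S" and f: "f = \<Phi> g" by auto
    have pin: "p j < n" if "j < n" for j using permutes_in_image[OF p(1)] that by (auto simp: n_def)
    have "f \<in> {..<length l} \<rightarrow>\<^sub>E S"
      using g pin unfolding cntS_def PiE_iff f \<Phi>_def len n_def extensional_def by auto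
    moreover have "lka \<alpha> i = (\<Sum>j | j < length l \<and> f j = i. l ! j)" for i
    proof -
      have "(\<Sum>j | j < length l \<and> f j = i. l ! j) = (\<Sum>j<n. if g (p j) = i then l' ! p j else 0)"
        by (simp add: sum_filter_conv len n_def f \<Phi>_def lj cong: if_cong)
      also have "\<dots> = (\<Sum>j<n. if g j = i then l' ! j else 0)"
        using sum.permute[OF p(1), of "\<lambda>j. if g j = i then l' ! j else 0"] by (simp add: n_def comp_def)
      also have "\<dots> = lka \<alpha> i" using g by (simp add: cntS_def sum_filter_conv n_def)
      finally show ?thesis by simp
    qed
    ultimately show "f \<in> cntS l \<alpha> S" by (simp add: cntS_def)
  qed
  show ?thesis using card_inj_on_le[OF inj img finite_cntS[OF S]] .
qed

lemma cntS_perm: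
  assumes "mset l = mset l'" "finite S"
  shows "card (cntS l \<alpha> S) = card (cntS l' \<alpha> S)"
  using cntS_perm_le[OF assms, of \<alpha>] cntS_perm_le[OF assms(1)[symmetric] assms(2), of \<alpha>] by linarith


lemma lookup_minus_single:
  "lka (\<alpha> - Poly_Mapping.single i k) j = lka \<alpha> j - (if i = j then k else 0)"
  by (simp add: lookup_minus lookup_single when_def)

lemma sum_cons_split:
  "(\<Sum>j | j < Suc (length l) \<and> f j = i'. (k # l) ! j)
     = (if f 0 = i' then k else 0) + (\<Sum>j | j < length l \<and> f (Suc j) = i'. l ! j)"
  unfolding sum_filter_conv sum.lessThan_Suc_shift nth_Cons_Suc by simp

lemma cntS_cons:
  assumes k: "0 < k"
  shows "card (cntS (k # l) \<alpha> (Poly_Mapping.keys \<alpha>)) =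
    (\<Sum>i\<in>{i\<in>Poly_Mapping.keys \<alpha>. k \<le> lka \<alpha> i}. card (cntS l (\<alpha> - Poly_Mapping.single i k) (Poly_Mapping.keys \<alpha>)))"
proof -
  define K where "K = Poly_Mapping.keys \<alpha>"
  define n where "n = length l"
  define tl' where "tl' f = (\<lambda>j. if j < n then f (Suc j) else undefined)" for f :: "nat \<Rightarrow> nat"
  define ex where "ex ig = (\<lambda>j. if j = 0 then fst ig else if j < Suc n then snd ig (j - 1) else undefined)"
    for ig :: "nat \<times> (nat \<Rightarrow> nat)"
  define A where "A = cntS (k # l) \<alpha> K"
  define B where "B = (SIGMA i:{i\<in>K. k \<le> lka \<alpha> i}. cntS l (\<alpha> - Poly_Mapping.single i k) K)"
  have condeq: "(\<forall>i'. lka \<alpha> i' = (if i = i' then k else 0) + T i') \<longleftrightarrow>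
      (k \<le> lka \<alpha> i \<and> (\<forall>i'. lka (\<alpha> - Poly_Mapping.single i k) i' = T i'))" for i and T :: "nat \<Rightarrow> nat"
  proof
    assume H: "\<forall>i'. lka \<alpha> i' = (if i = i' then k else 0) + T i'"
    then show "k \<le> lka \<alpha> i \<and> (\<forall>i'. lka (\<alpha> - Poly_Mapping.single i k) i' = T i')"
      by (auto simp: lookup_minus_single)
  next
    assume H: "k \<le> lka \<alpha> i \<and> (\<forall>i'. lka (\<alpha> - Poly_Mapping.single i k) i' = T i')"
    show "\<forall>i'. lka \<alpha> i' = (if i = i' then k else 0) + T i'"
    proof
      fix i' show "lka \<alpha> i' = (if i = i' then k else 0) + T i'"
        using H[THEN conjunct2, rule_format, of i'] H[THEN conjunct1]
        by (cases "i = i'") (auto simp: lookup_minus_single)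
    qed
  qed
  have tlsum: "(\<Sum>j | j < length l \<and> tl' f j = i'. l ! j) = (\<Sum>j | j < length l \<and> f (Suc j) = i'. l ! j)"
    for f i' by (rule sum.cong) (auto simp: tl'_def n_def)
  have exsum: "(\<Sum>j | j < length l \<and> ex (i, g) (Suc j) = i'. l ! j) = (\<Sum>j | j < length l \<and> g j = i'. l ! j)"
    for i g i' by (rule sum.cong) (auto simp: ex_def n_def)
  have bij: "bij_betw (\<lambda>f. (f 0, tl' f)) A B"
  proof (rule bij_betw_byWitness[where f'=ex])
    show "\<forall>a\<in>A. ex (a 0, tl' a) = a"
    proof
      fix f assume "f \<in> A"
      then have "f \<in> {..<Suc n} \<rightarrow>\<^sub>E K" by (simp add: A_def cntS_def n_def)
      then show "ex (f 0, tl' f) = f"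
        by (auto simp: ex_def tl'_def fun_eq_iff PiE_iff extensional_def)
    qed
    show "\<forall>b\<in>B. (ex b 0, tl' (ex b)) = b"
    proof
      fix b assume "b \<in> B"
      then obtain i g where b: "b = (i, g)" "g \<in> {..<n} \<rightarrow>\<^sub>E K"
        by (auto simp: B_def cntS_def n_def)
      then show "(ex b 0, tl' (ex b)) = b"
        by (auto simp: ex_def tl'_def fun_eq_iff PiE_iff extensional_def)
    qed
    show "(\<lambda>f. (f 0, tl' f)) ` A \<subseteq> B"
    proof
      fix x assume "x \<in> (\<lambda>f. (f 0, tl' f)) ` A"
      then obtain f where f: "f \<in> A" and x: "x = (f 0, tl' f)" by auto
      have fP: "f \<in> {..<Suc n} \<rightarrow>\<^sub>E K" and fc: "\<forall>i'. lka \<alpha> i' = (\<Sum>j | j < Suc (length l) \<and> f j = i'. (k # l) ! j)"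
        using f by (auto simp: A_def cntS_def n_def)
      have "\<forall>i'. lka \<alpha> i' = (if f 0 = i' then k else 0) + (\<Sum>j | j < length l \<and> tl' f j = i'. l ! j)"
        using fc by (simp add: sum_cons_split tlsum)
      then have c2: "k \<le> lka \<alpha> (f 0)" "\<forall>i'. lka (\<alpha> - Poly_Mapping.single (f 0) k) i' = (\<Sum>j | j < length l \<and> tl' f j = i'. l ! j)"
        using condeq[of "f 0" "\<lambda>i'. (\<Sum>j | j < length l \<and> tl' f j = i'. l ! j)"] by auto
      have "f 0 \<in> K" using fP by auto
      moreover have "tl' f \<in> {..<n} \<rightarrow>\<^sub>E K" using fP by (auto simp: tl'_def PiE_iff extensional_def)
      ultimately show "x \<in> B" using c2 by (auto simp: B_def cntS_def x n_def)
    qed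
    show "ex ` B \<subseteq> A"
    proof
      fix x assume "x \<in> ex ` B"
      then obtain i g where ig: "(i, g) \<in> B" and x: "x = ex (i, g)" by auto
      have i: "i \<in> K" "k \<le> lka \<alpha> i" and gP: "g \<in> {..<n} \<rightarrow>\<^sub>E K"
        and gc: "\<forall>i'. lka (\<alpha> - Poly_Mapping.single i k) i' = (\<Sum>j | j < length l \<and> g j = i'. l ! j)"
        using ig by (auto simp: B_def cntS_def n_def)
      have "\<forall>i'. lka \<alpha> i' = (if i = i' then k else 0) + (\<Sum>j | j < length l \<and> g j = i'. l ! j)"
        using condeq[of i "\<lambda>i'. (\<Sum>j | j < length l \<and> g j = i'. l ! j)"] i gc by auto
      moreover have ex0: "ex (i, g) 0 = i" by (simp add: ex_def)
      ultimately have "\<forall>i'. lka \<alpha> i' = (\<Sum>j | j < Suc (length l) \<and> ex (i, g) j = i'. (k # l) ! j)"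
        using ex0 by (simp add: sum_cons_split exsum)
      moreover have "ex (i, g) \<in> {..<Suc n} \<rightarrow>\<^sub>E K" using gP i by (auto simp: ex_def PiE_iff extensional_def)
      ultimately show "x \<in> A" by (simp add: A_def cntS_def x n_def)
    qed
  qed
  have "card A = card B" using bij_betw_same_card[OF bij] .
  also have "card B = (\<Sum>i\<in>{i\<in>K. k \<le> lka \<alpha> i}. card (cntS l (\<alpha> - Poly_Mapping.single i k) K))"
    unfolding B_def by (rule card_SigmaI) (auto simp: K_def intro: finite_cntS)
  finally show ?thesis by (simp add: A_def K_def)
qed

lemma keys_minus_single_sub: "Poly_Mapping.keys (\<alpha> - Poly_Mapping.single i k) \<subseteq> Poly_Mapping.keys (\<alpha>::nat \<Rightarrow>\<^sub>0 nat)"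
  by (auto simp: in_keys_iff lookup_minus_single)

lemma pmon_mcoeff_add:
  assumes k: "0 < k" and pos: "0 \<notin># lam"
  shows "pmon_mcoeff (add_mset k lam) \<alpha> =
    (\<Sum>i\<in>{i\<in>Poly_Mapping.keys \<alpha>. k \<le> lka \<alpha> i}. pmon_mcoeff lam (\<alpha> - Poly_Mapping.single i k))"
proof -
  let ?K = "Poly_Mapping.keys \<alpha>"
  let ?l = "sorted_list_of_multiset lam"
  have posl: "\<forall>x\<in>set ?l. 0 < x" using pos by (auto intro: gr0I)
  have "pmon_mcoeff (add_mset k lam) \<alpha> = card (cntS (sorted_list_of_multiset (add_mset k lam)) \<alpha> ?K)"
    by (simp add: pmon_mcoeff_alt)
  also have "\<dots> = card (cntS (k # ?l) \<alpha> ?K)"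
    by (rule cntS_perm) auto
  also have "\<dots> = (\<Sum>i\<in>{i\<in>?K. k \<le> lka \<alpha> i}. card (cntS ?l (\<alpha> - Poly_Mapping.single i k) ?K))"
    by (rule cntS_cons[OF k])
  also have "\<dots> = (\<Sum>i\<in>{i\<in>?K. k \<le> lka \<alpha> i}. pmon_mcoeff lam (\<alpha> - Poly_Mapping.single i k))"
    by (rule sum.cong[OF refl]) (simp add: pmon_mcoeff_alt cntS_super[OF posl keys_minus_single_sub])
  finally show ?thesis .
qed

lemma pmon_mcoeff_empty: "pmon_mcoeff {#} \<alpha> = (if \<alpha> = 0 then 1 else 0)"
proof -
  have "cntS [] \<alpha> (Poly_Mapping.keys \<alpha>) = (if \<alpha> = 0 then {\<lambda>_. undefined} else {})"
    by (auto simp: cntS_def poly_mapping_eq_iff fun_eq_iff)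
  then show ?thesis by (simp add: pmon_mcoeff_alt)
qed


lemma mexp_super:
  assumes "finite S" "Poly_Mapping.keys F \<subseteq> S"
  shows "mexp F \<alpha> = (\<Sum>l\<in>S. lk F l * of_nat (pmon_mcoeff l \<alpha>))"
  unfolding mexp_def using assms by (intro sum.mono_neutral_left) (auto simp: in_keys_iff)

lemma mexp_add: "mexp (F + G) \<alpha> = mexp F \<alpha> + mexp G \<alpha>"
proof -
  let ?S = "Poly_Mapping.keys F \<union> Poly_Mapping.keys G"
  have "mexp (F + G) \<alpha> = (\<Sum>l\<in>?S. lk (F + G) l * of_nat (pmon_mcoeff l \<alpha>))"
    by (rule mexp_super) (use keys_add[of F G] in auto)
  also have "\<dots> = (\<Sum>l\<in>?S. lk F l * of_nat (pmon_mcoeff l \<alpha>)) + (\<Sum>l\<in>?S. lk G l * of_nat (pmon_mcoeff l \<alpha>))"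
    by (simp add: lookup_add algebra_simps sum.distrib)
  also have "\<dots> = mexp F \<alpha> + mexp G \<alpha>"
    by (subst (1 2) mexp_super[of ?S]) auto
  finally show ?thesis .
qed

lemma mexp_diff: "mexp (F - G) \<alpha> = mexp F \<alpha> - mexp G \<alpha>"
proof -
  let ?S = "Poly_Mapping.keys F \<union> Poly_Mapping.keys G"
  have "mexp (F - G) \<alpha> = (\<Sum>l\<in>?S. lk (F - G) l * of_nat (pmon_mcoeff l \<alpha>))"
    by (rule mexp_super) (auto simp: in_keys_iff lookup_minus)
  also have "\<dots> = (\<Sum>l\<in>?S. lk F l * of_nat (pmon_mcoeff l \<alpha>)) - (\<Sum>l\<in>?S. lk G l * of_nat (pmon_mcoeff l \<alpha>))"
    by (simp add: lookup_minus algebra_simps sum_subtractf)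
  also have "\<dots> = mexp F \<alpha> - mexp G \<alpha>"
    by (subst (1 2) mexp_super[of ?S]) auto
  finally show ?thesis .
qed

lemma mexp_sc: "mexp (sc c * F) \<alpha> = c * mexp F \<alpha>"
proof -
  have "mexp (sc c * F) \<alpha> = (\<Sum>l\<in>Poly_Mapping.keys F. lk (sc c * F) l * of_nat (pmon_mcoeff l \<alpha>))"
    by (rule mexp_super) (auto simp: in_keys_iff)
  also have "\<dots> = (\<Sum>l\<in>Poly_Mapping.keys F. c * (lk F l * of_nat (pmon_mcoeff l \<alpha>)))"
    by (simp only: lookup_sc_mult mult.assoc)
  finally show ?thesis by (simp add: mexp_def sum_distrib_left)
qed

lemma mexp_zero: "mexp 0 \<alpha> = 0"
  by (simp add: mexp_def)

lemma mexp_sum: "mexp (sum f A) \<alpha> = (\<Sum>x\<in>A. mexp (f x) \<alpha>)"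
  by (induction A rule: infinite_finite_induct) (auto simp: mexp_add mexp_zero)

lemma mexp_one: "mexp 1 \<alpha> = (if \<alpha> = 0 then 1 else 0)"
proof -
  have "(1::symf) = Poly_Mapping.single {#} 1" by simp
  then have k: "Poly_Mapping.keys (1::symf) = {{#}}" by simp
  show ?thesis by (simp add: mexp_def k pmon_mcoeff_empty lookup_one)
qed

lemma keys_diff_sub: "Poly_Mapping.keys (F - G) \<subseteq> Poly_Mapping.keys F \<union> Poly_Mapping.keys (G::symf)"
proof
  fix x assume "x \<in> Poly_Mapping.keys (F - G)"
  then have "lk F x - lk G x \<noteq> 0" by (simp add: in_keys_iff lookup_minus)
  then have "lk F x \<noteq> 0 \<or> lk G x \<noteq> 0" by auto
  then show "x \<in> Poly_Mapping.keys F \<union> Poly_Mapping.keys G" by (simp add: in_keys_iff)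
qed
lemma keys_sc_sub: "Poly_Mapping.keys (sc c * F) \<subseteq> Poly_Mapping.keys F"
proof
  fix x assume "x \<in> Poly_Mapping.keys (sc c * F)"
  then have "c * lk F x \<noteq> 0" by (simp add: in_keys_iff)
  then show "x \<in> Poly_Mapping.keys F" by (simp add: in_keys_iff)
qed
lemma sym_valid_add: "sym_valid F \<Longrightarrow> sym_valid G \<Longrightarrow> sym_valid (F + G)"
  unfolding sym_valid_def using keys_add[of F G] by blast
lemma sym_valid_diff: "sym_valid F \<Longrightarrow> sym_valid G \<Longrightarrow> sym_valid (F - G)"
  unfolding sym_valid_def using keys_diff_sub[of F G] by blast
lemma sym_valid_sc: "sym_valid F \<Longrightarrow> sym_valid (sc c * F)"
  unfolding sym_valid_def using keys_sc_sub[of c F] by blast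
lemma sym_valid_zero: "sym_valid 0"
  unfolding sym_valid_def by simp
lemma sym_valid_one: "sym_valid 1"
  unfolding sym_valid_def by simp
lemma sym_valid_sum: "(\<And>x. x \<in> A \<Longrightarrow> sym_valid (f x)) \<Longrightarrow> sym_valid (sum f A)"
  by (induction A rule: infinite_finite_induct) (auto simp: sym_valid_add sym_valid_zero)

lemma keys_psum_mult: "Poly_Mapping.keys (psum k * F) \<subseteq> add_mset k ` Poly_Mapping.keys F"
proof
  fix m assume "m \<in> Poly_Mapping.keys (psum k * F)"
  then obtain a b where "m = a + b" "a \<in> Poly_Mapping.keys (psum k)" "b \<in> Poly_Mapping.keys F"
    using keys_mult by blast
  then show "m \<in> add_mset k ` Poly_Mapping.keys F" by (auto simp: psum_def pmon_def)
qed

lemma lookup_psum_mult: "lk (psum k * F) (add_mset k b) = lk F b"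
  using lookup_single_mult[of "{#k#}" 1 F b] by (simp add: psum_def pmon_def)

lemma sym_valid_psum_mult: "0 < k \<Longrightarrow> sym_valid F \<Longrightarrow> sym_valid (psum k * F)"
  unfolding sym_valid_def using keys_psum_mult by fastforce

lemma mexp_psum_mult:
  assumes k: "0 < k" and F: "sym_valid F"
  shows "mexp (psum k * F) \<alpha> =
    (\<Sum>i\<in>{i\<in>Poly_Mapping.keys \<alpha>. k \<le> lka \<alpha> i}. mexp F (\<alpha> - Poly_Mapping.single i k))"
proof -
  let ?I = "{i\<in>Poly_Mapping.keys \<alpha>. k \<le> lka \<alpha> i}"
  have "mexp (psum k * F) \<alpha> = (\<Sum>m\<in>add_mset k ` Poly_Mapping.keys F. lk (psum k * F) m * of_nat (pmon_mcoeff m \<alpha>))"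
    by (rule mexp_super) (auto intro: keys_psum_mult[THEN subsetD])
  also have "\<dots> = (\<Sum>b\<in>Poly_Mapping.keys F. lk F b * of_nat (pmon_mcoeff (add_mset k b) \<alpha>))"
    by (subst sum.reindex) (auto simp: inj_on_def lookup_psum_mult)
  also have "\<dots> = (\<Sum>b\<in>Poly_Mapping.keys F. \<Sum>i\<in>?I. lk F b * of_nat (pmon_mcoeff b (\<alpha> - Poly_Mapping.single i k)))"
  proof (rule sum.cong[OF refl])
    fix b assume "b \<in> Poly_Mapping.keys F"
    then have "0 \<notin># b" using F by (auto simp: sym_valid_def)
    then show "lk F b * of_nat (pmon_mcoeff (add_mset k b) \<alpha>) =
      (\<Sum>i\<in>?I. lk F b * of_nat (pmon_mcoeff b (\<alpha> - Poly_Mapping.single i k)))"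
      by (simp add: pmon_mcoeff_add[OF k] sum_distrib_left)
  qed
  also have "\<dots> = (\<Sum>i\<in>?I. mexp F (\<alpha> - Poly_Mapping.single i k))"
    by (subst sum.swap) (simp add: mexp_def)
  finally show ?thesis .
qed

lemma mexp_inj0:
  assumes F: "sym_valid F" and z: "\<And>\<alpha>. mexp F \<alpha> = 0"
  shows "F = 0"
proof (rule ccontr)
  assume "F \<noteq> 0"
  then have ne: "Poly_Mapping.keys F \<noteq> {}" by (metis keys_eq_empty)
  define m where "m = Max (size ` Poly_Mapping.keys F)"
  have "m \<in> size ` Poly_Mapping.keys F" unfolding m_def using ne by (intro Max_in) auto
  then obtain lam where lam: "lam \<in> Poly_Mapping.keys F" "size lam = m" by auto
  have maxs: "size \<mu> \<le> m" if "\<mu> \<in> Poly_Mapping.keys F" for \<mu>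
    unfolding m_def using that by (intro Max_ge) auto
  define l where "l = sorted_list_of_multiset lam"
  define n where "n = length l"
  have nm: "n = m" using lam by (metis n_def l_def mset_sorted_list_of_multiset size_mset)
  have lpos: "0 < l ! i" if "i < n" for i
  proof -
    have "l ! i \<in># lam" using that by (metis l_def n_def nth_mem set_sorted_list_of_multiset)
    then show ?thesis using F lam(1) by (auto simp: sym_valid_def intro: gr0I)
  qed
  define \<alpha> where "\<alpha> = (\<Sum>j<n. Poly_Mapping.single j (l ! j))"
  have la: "lka \<alpha> i = (if i < n then l ! i else 0)" for i
    by (simp add: \<alpha>_def lookup_sum lookup_single when_def)
  have ka: "Poly_Mapping.keys \<alpha> = {..<n}"
    using lpos by (auto simp: in_keys_iff la split: if_splits)
  have A: "pmon_mcoeff \<mu> \<alpha> = 0" if mu: "\<mu> \<in> Poly_Mapping.keys F" "\<mu> \<noteq> lam" for \<mu>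
  proof (rule ccontr)
    assume "pmon_mcoeff \<mu> \<alpha> \<noteq> 0"
    define l' where "l' = sorted_list_of_multiset \<mu>"
    define n' where "n' = length l'"
    have "cntS l' \<alpha> {..<n} \<noteq> {}" using \<open>pmon_mcoeff \<mu> \<alpha> \<noteq> 0\<close>
      by (auto simp: pmon_mcoeff_alt l'_def ka)
    then obtain f where fP: "f \<in> {..<n'} \<rightarrow>\<^sub>E {..<n}"
      and fc: "\<And>i. lka \<alpha> i = (\<Sum>j | j < n' \<and> f j = i. l' ! j)"
      by (auto simp: cntS_def n'_def)
    have n'n: "n' \<le> n" using maxs[OF mu(1)] nm by (metis n'_def l'_def mset_sorted_list_of_multiset size_mset)
    have sub: "{..<n} \<subseteq> f ` {..<n'}"
    proof
      fix i assume i: "i \<in> {..<n}"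
      have s: "(\<Sum>j | j < n' \<and> f j = i. l' ! j) = l ! i" using fc[of i] la[of i] i by simp
      have "{j. j < n' \<and> f j = i} \<noteq> {}"
      proof
        assume "{j. j < n' \<and> f j = i} = {}"
        then have "(\<Sum>j | j < n' \<and> f j = i. l' ! j) = 0" by (simp only: sum.empty)
        with s lpos[of i] i show False by simp
      qed
      then obtain j where "j < n'" "f j = i" by blast
      then show "i \<in> f ` {..<n'}" by auto
    qed
    have "n \<le> card (f ` {..<n'})" using card_mono[OF _ sub] by simp
    also have "\<dots> \<le> n'" using card_image_le[of "{..<n'}" f] by simp
    finally have nn: "n' = n" using n'n by simp
    have img: "f ` {..<n} = {..<n}" using sub fP nn by (auto simp: PiE_iff)
    have inj: "inj_on f {..<n}" using img by (intro eq_card_imp_inj_on) auto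
    have vals: "l' ! j = l ! (f j)" if j: "j < n" for j
    proof -
      have fj: "f j < n" using img j by auto
      have "{j'. j' < n' \<and> f j' = f j} = {j}" using inj j nn by (auto simp: inj_on_def)
      then show ?thesis using fc[of "f j"] la[of "f j"] fj by simp
    qed
    have "\<mu> = mset l'" by (simp add: l'_def)
    also have "\<dots> = mset (map (nth l') [0..<n])" using nn map_nth[of l'] unfolding n'_def by metis
    also have "\<dots> = mset (map (\<lambda>j. l ! (f j)) [0..<n])" using vals by (intro arg_cong[where f=mset] map_cong) auto
    also have "\<dots> = image_mset (nth l) (image_mset f (mset_set {..<n}))"
      by (simp add: mset_upt multiset.map_comp comp_def atLeast0LessThan)
    also have "\<dots> = image_mset (nth l) (mset_set {..<n})"
      using image_mset_mset_set[OF inj] img by simp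
    also have "\<dots> = mset (map (nth l) [0..<n])" by (simp add: mset_upt atLeast0LessThan)
    also have "\<dots> = lam" using map_nth[of l] unfolding n_def l_def by (metis mset_sorted_list_of_multiset)
    finally show False using mu by simp
  qed
  have B: "pmon_mcoeff lam \<alpha> \<noteq> 0"
  proof -
    define f0 where "f0 = (\<lambda>j. if j < n then j else undefined)"
    have "f0 \<in> cntS l \<alpha> {..<n}"
    proof -
      have "(\<Sum>j | j < n \<and> f0 j = i. l ! j) = (if i < n then l ! i else 0)" for i
      proof -
        have "{j. j < n \<and> f0 j = i} = (if i < n then {i} else {})" by (auto simp: f0_def)
        then show ?thesis by simp
      qed
      then show ?thesis by (auto simp: cntS_def f0_def n_def la PiE_iff extensional_def)
    qed
    then have "cntS l \<alpha> {..<n} \<noteq> {}" by auto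
    then show ?thesis using finite_cntS[of "{..<n}" l \<alpha>] by (simp add: pmon_mcoeff_alt ka l_def)
  qed
  have "mexp F \<alpha> = (\<Sum>\<mu>\<in>Poly_Mapping.keys F. lk F \<mu> * of_nat (pmon_mcoeff \<mu> \<alpha>))" by (simp add: mexp_def)
  also have "\<dots> = (\<Sum>\<mu>\<in>{lam}. lk F \<mu> * of_nat (pmon_mcoeff \<mu> \<alpha>))"
    by (rule sum.mono_neutral_right) (auto simp: A lam(1))
  also have "\<dots> = lk F lam * of_nat (pmon_mcoeff lam \<alpha>)" by simp
  also have "\<dots> \<noteq> 0" using lam(1) B by (auto simp: in_keys_iff)
  finally show False using z by simp
qed

lemma mexp_inj:
  assumes "sym_valid F" "sym_valid G" "\<And>\<alpha>. mexp F \<alpha> = mexp G \<alpha>"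
  shows "F = G"
  using mexp_inj0[of "F - G"] assms by (simp add: sym_valid_diff mexp_diff)


section \<open>Cycles\<close>

lemma cyc_orbit: "\<sigma> permutes A \<Longrightarrow> finite A \<Longrightarrow> cyc \<sigma> x = orbit \<sigma> x"
  unfolding cyc_def by (rule orbit_altdef_permutation[symmetric]) (auto simp: permutation_permutes)

lemma self_in_cyc: "x \<in> cyc \<sigma> x"
  unfolding cyc_def by (auto intro: exI[where x=0])

lemma cyc_subset: "\<sigma> permutes A \<Longrightarrow> finite A \<Longrightarrow> x \<in> A \<Longrightarrow> cyc \<sigma> x \<subseteq> A"
  by (simp add: cyc_orbit permutes_orbit_subset)

lemma cyc_cyclic: "\<sigma> permutes A \<Longrightarrow> finite A \<Longrightarrow> cyclic_on \<sigma> (cyc \<sigma> x)"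
  by (simp add: cyc_orbit cyclic_on_orbit)

lemma cyc_eq: "\<sigma> permutes A \<Longrightarrow> finite A \<Longrightarrow> y \<in> cyc \<sigma> x \<Longrightarrow> cyc \<sigma> y = cyc \<sigma> x"
  using orbit_cyclic_eq3[OF cyc_cyclic] by (metis cyc_orbit)

lemma finite_cyc: "\<sigma> permutes A \<Longrightarrow> finite A \<Longrightarrow> finite (cyc \<sigma> x)"
  using cyc_cyclic finite_cyclic_on by blast

lemma cyc_step: "\<sigma> permutes A \<Longrightarrow> finite A \<Longrightarrow> cyc \<sigma> (\<sigma> x) = cyc \<sigma> x"
proof -
  assume a: "\<sigma> permutes A" "finite A"
  have "\<sigma> x \<in> cyc \<sigma> x" unfolding cyc_def by (auto intro: exI[where x=1])
  then show ?thesis using cyc_eq[OF a] by blast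
qed

lemma funpow_cyc_in: "(\<sigma> ^^ k) x \<in> cyc \<sigma> x"
  unfolding cyc_def by auto

definition cycs :: "(nat \<Rightarrow> nat) \<Rightarrow> nat set \<Rightarrow> nat set set" where
  "cycs \<sigma> A = {cyc \<sigma> i | i. i \<in> A}"

lemma cycs_image: "cycs \<sigma> A = cyc \<sigma> ` A"
  by (auto simp: cycs_def)

lemma finite_cycs: "finite A \<Longrightarrow> finite (cycs \<sigma> A)"
  by (simp add: cycs_image)

definition merge :: "nat set \<Rightarrow> (nat \<Rightarrow> nat) \<Rightarrow> (nat \<Rightarrow> nat) \<Rightarrow> nat \<Rightarrow> nat" where
  "merge C \<tau> \<rho> = (\<lambda>x. if x \<in> C then \<tau> x else \<rho> x)"

lemma funpow_restrict_eq:
  assumes "\<And>x. x \<in> C \<Longrightarrow> \<sigma> x = \<tau> x" "\<And>x. x \<in> C \<Longrightarrow> \<tau> x \<in> C" "x \<in> C"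
  shows "(\<sigma> ^^ k) x = (\<tau> ^^ k) x \<and> (\<tau> ^^ k) x \<in> C"
  using assms by (induction k) auto

lemma merge_props:
  assumes A: "finite A" and CA: "C \<subseteq> A" and aC: "a \<in> C" and \<tau>: "\<tau> permutes C"
    and ct: "cyc \<tau> a = C" and \<rho>: "\<rho> permutes (A - C)"
  shows "merge C \<tau> \<rho> permutes A" "cyc (merge C \<tau> \<rho>) a = C"
    "cycs (merge C \<tau> \<rho>) A = insert C (cycs \<rho> (A - C))" "C \<notin> cycs \<rho> (A - C)"
proof -
  let ?\<sigma> = "merge C \<tau> \<rho>"
  have fC: "finite C" using A CA finite_subset by blast
  have eq: "?\<sigma> = \<tau> \<circ> \<rho>"
  proof
    fix x show "?\<sigma> x = (\<tau> \<circ> \<rho>) x"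
    proof (cases "x \<in> C")
      case True
      then have "\<rho> x = x" using \<rho> by (simp add: permutes_not_in)
      then show ?thesis using True by (simp add: merge_def)
    next
      case False
      have "\<rho> x \<notin> C"
      proof (cases "x \<in> A - C")
        case True then show ?thesis using permutes_in_image[OF \<rho>] by auto
      next
        case False' : False
        then have "\<rho> x = x" using \<rho> by (simp add: permutes_not_in)
        then show ?thesis using False by simp
      qed
      then show ?thesis using False \<tau> by (simp add: merge_def permutes_not_in)
    qed
  qed
  show perm: "?\<sigma> permutes A"
    unfolding eq using permutes_subset[OF \<tau> CA] permutes_subset[OF \<rho>, of A]
    by (intro permutes_compose) auto
  have tauC: "\<tau> x \<in> C" if "x \<in> C" for x using permutes_in_image[OF \<tau>] that by simp
  have cycC: "cyc ?\<sigma> x = C" if x: "x \<in> C" for x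
  proof -
    have "cyc ?\<sigma> x = cyc \<tau> x"
      unfolding cyc_def using funpow_restrict_eq[of C ?\<sigma> \<tau>, OF _ tauC x] by (auto simp: merge_def)
    also have "\<dots> = C" using cyc_eq[OF \<tau> fC, of x a] x ct by simp
    finally show ?thesis .
  qed
  show "cyc ?\<sigma> a = C" using cycC[OF aC] .
  have rhoC: "\<rho> x \<in> A - C" if "x \<in> A - C" for x using permutes_in_image[OF \<rho>] that by simp
  have cycR: "cyc ?\<sigma> x = cyc \<rho> x" if x: "x \<in> A - C" for x
    unfolding cyc_def using funpow_restrict_eq[of "A - C" ?\<sigma> \<rho>, OF _ rhoC x] by (auto simp: merge_def)
  have "cycs ?\<sigma> A = cyc ?\<sigma> ` C \<union> cyc ?\<sigma> ` (A - C)" using CA by (auto simp: cycs_image)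
  also have "cyc ?\<sigma> ` C = {C}" using cycC aC by auto
  also have "cyc ?\<sigma> ` (A - C) = cycs \<rho> (A - C)" using cycR by (auto simp: cycs_image)
  finally show "cycs ?\<sigma> A = insert C (cycs \<rho> (A - C))" by simp
  show "C \<notin> cycs \<rho> (A - C)"
  proof
    assume "C \<in> cycs \<rho> (A - C)"
    then obtain i where "i \<in> A - C" "C = cyc \<rho> i" by (auto simp: cycs_def)
    then show False using self_in_cyc[of i \<rho>] by auto
  qed
qed

lemma split_props:
  assumes A: "finite A" and \<sigma>: "\<sigma> permutes A" and aA: "a \<in> A"
  defines "C \<equiv> cyc \<sigma> a"
  shows "perm_restrict \<sigma> C permutes C" "cyc (perm_restrict \<sigma> C) a = C"
    "perm_restrict \<sigma> (A - C) permutes (A - C)"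
    "merge C (perm_restrict \<sigma> C) (perm_restrict \<sigma> (A - C)) = \<sigma>"
    "C \<subseteq> A" "a \<in> C"
proof -
  have cyc: "cyclic_on \<sigma> C" unfolding C_def by (rule cyc_cyclic[OF \<sigma> A])
  have fC: "finite C" unfolding C_def by (rule finite_cyc[OF \<sigma> A])
  show CA: "C \<subseteq> A" unfolding C_def by (rule cyc_subset[OF \<sigma> A aA])
  show aC: "a \<in> C" unfolding C_def by (rule self_in_cyc)
  have into: "\<sigma> x \<in> C" if "x \<in> C" for x using cyclic_on_inI[OF cyc that] .
  have "\<sigma> ` C = C"
  proof -
    have sub: "\<sigma> ` C \<subseteq> C" using into by auto
    have "card (\<sigma> ` C) = card C" using permutes_inj[OF \<sigma>] by (simp add: card_image inj_on_def inj_def)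
    then show ?thesis using card_subset_eq[OF fC sub] by simp
  qed
  then have "bij_betw \<sigma> C C" using permutes_inj[OF \<sigma>] by (simp add: bij_betw_def inj_on_def inj_def)
  then have "bij_betw (perm_restrict \<sigma> C) C C" by (rule bij_betw_cong[THEN iffD1, rotated]) (simp add: perm_restrict_def)
  then show "perm_restrict \<sigma> C permutes C" by (rule bij_imp_permutes) (simp add: perm_restrict_def)
  show "cyc (perm_restrict \<sigma> C) a = C"
  proof -
    have "cyc (perm_restrict \<sigma> C) a = cyc \<sigma> a"
      unfolding cyc_def using funpow_restrict_eq[of C "perm_restrict \<sigma> C" \<sigma>, OF _ into aC]
      by (auto simp: perm_restrict_def)
    then show ?thesis by (simp add: C_def)
  qed
  show "perm_restrict \<sigma> (A - C) permutes (A - C)" by (rule perm_restrict_diff_cyclic[OF \<sigma> cyc])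
  show "merge C (perm_restrict \<sigma> C) (perm_restrict \<sigma> (A - C)) = \<sigma>"
    using \<sigma> by (auto simp: merge_def perm_restrict_def fun_eq_iff permutes_not_in)
qed

lemma sum_subsets_card:
  assumes "finite B"
  shows "(\<Sum>E\<in>Pow B. (h::nat \<Rightarrow> 'a::comm_semiring_1) (card E)) = (\<Sum>j\<in>{0..card B}. of_nat (card B choose j) * h j)"
proof -
  have "(\<Sum>E\<in>Pow B. h (card E)) = (\<Sum>j\<in>{0..card B}. \<Sum>E\<in>{E\<in>Pow B. card E = j}. h (card E))"
    by (rule sum.group[symmetric]) (use assms in \<open>auto intro: card_mono\<close>)
  also have "\<dots> = (\<Sum>j\<in>{0..card B}. of_nat (card B choose j) * h j)"
  proof (rule sum.cong[OF refl])
    fix j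
    have "(\<Sum>E\<in>{E\<in>Pow B. card E = j}. h (card E)) = (\<Sum>E\<in>{E\<in>Pow B. card E = j}. h j)"
      by (rule sum.cong) auto
    also have "\<dots> = of_nat (card {E\<in>Pow B. card E = j}) * h j" by simp
    also have "{E\<in>Pow B. card E = j} = {E. E \<subseteq> B \<and> card E = j}" by auto
    finally show "(\<Sum>E\<in>{E\<in>Pow B. card E = j}. h (card E)) = of_nat (card B choose j) * h j"
      using n_subsets[OF assms, of j] by simp
  qed
  finally show ?thesis .
qed

lemma sum_subsets_containing:
  assumes A: "finite A" and aA: "a \<in> A"
  shows "(\<Sum>D\<in>{D. a \<in> D \<and> D \<subseteq> A}. (f::nat \<Rightarrow> 'a::comm_semiring_1) (card D))
       = (\<Sum>k\<in>{1..card A}. of_nat (card A - 1 choose (k - 1)) * f k)"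
proof -
  let ?B = "A - {a}"
  have fB: "finite ?B" using A by simp
  have cB: "card ?B = card A - 1" using A aA by simp
  have "(\<Sum>D\<in>{D. a \<in> D \<and> D \<subseteq> A}. f (card D)) = (\<Sum>E\<in>Pow ?B. f (card (insert a E)))"
  proof (rule sum.reindex_bij_witness[where i="insert a" and j="\<lambda>D. D - {a}"])
    fix D assume "D \<in> {D. a \<in> D \<and> D \<subseteq> A}"
    then show "insert a (D - {a}) = D" "D - {a} \<in> Pow ?B" "f (card (insert a (D - {a}))) = f (card D)" by (auto simp: insert_absorb)
  next
    fix E assume "E \<in> Pow ?B"
    then show "insert a E - {a} = E" "insert a E \<in> {D. a \<in> D \<and> D \<subseteq> A}" using aA by auto
  qed
  also have "\<dots> = (\<Sum>E\<in>Pow ?B. f (card E + 1))"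
  proof (rule sum.cong[OF refl])
    fix E assume "E \<in> Pow ?B"
    then have "finite E" "a \<notin> E" using fB finite_subset by auto
    then show "f (card (insert a E)) = f (card E + 1)" by simp
  qed
  also have "\<dots> = (\<Sum>j\<in>{0..card ?B}. of_nat (card ?B choose j) * f (j + 1))"
    by (rule sum_subsets_card[OF fB])
  also have "\<dots> = (\<Sum>k\<in>{1..card A}. of_nat (card A - 1 choose (k - 1)) * f k)"
  proof -
    have cA: "card A = Suc (card ?B)" using A aA by (metis card_Suc_Diff1)
    let ?g = "\<lambda>k. of_nat (card A - 1 choose (k - 1)) * f k"
    have "(\<Sum>k\<in>{1..card A}. ?g k) = (\<Sum>k\<in>{Suc 0..Suc (card ?B)}. ?g k)" using cA by simp
    also have "\<dots> = (\<Sum>j\<in>{0..card ?B}. ?g (Suc j))" by (rule sum.shift_bounds_cl_Suc_ivl)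
    also have "\<dots> = (\<Sum>j\<in>{0..card ?B}. of_nat (card ?B choose j) * f (j + 1))" using cA by simp
    finally show ?thesis by simp
  qed
  finally show ?thesis .
qed


definition wt :: "(nat \<Rightarrow> 'a::comm_semiring_1) \<Rightarrow> (nat \<Rightarrow> nat) \<Rightarrow> nat set \<Rightarrow> 'a" where
  "wt g \<sigma> A = (\<Prod>C\<in>cycs \<sigma> A. g (card C))"

definition Sw :: "(nat \<Rightarrow> 'a::comm_semiring_1) \<Rightarrow> nat set \<Rightarrow> 'a" where
  "Sw g A = (\<Sum>\<sigma>\<in>{\<sigma>. \<sigma> permutes A}. wt g \<sigma> A)"

definition Ncyc :: "nat \<Rightarrow> nat set \<Rightarrow> nat" where
  "Ncyc a C = card {\<tau>. \<tau> permutes C \<and> cyc \<tau> a = C}"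

lemma Sw_empty: "Sw g {} = 1"
  by (simp add: Sw_def wt_def cycs_def)

lemma Sw_decomp:
  assumes A: "finite A" and aA: "a \<in> A"
  shows "Sw g A = (\<Sum>C\<in>{C. a \<in> C \<and> C \<subseteq> A}. of_nat (Ncyc a C) * g (card C) * Sw g (A - C))"
proof -
  let ?P = "{\<sigma>. \<sigma> permutes A}"
  let ?CC = "{C. a \<in> C \<and> C \<subseteq> A}"
  have fCC: "finite ?CC" by (rule finite_subset[of _ "Pow A"]) (use A in auto)
  have cs: "\<And>\<sigma>. \<sigma> \<in> ?P \<Longrightarrow> cyc \<sigma> a \<in> ?CC" using cyc_subset[OF _ A aA] self_in_cyc by blast
  have "Sw g A = (\<Sum>C\<in>?CC. \<Sum>\<sigma>\<in>{\<sigma>\<in>?P. cyc \<sigma> a = C}. wt g \<sigma> A)"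
    unfolding Sw_def
    by (rule sum.group[symmetric]) (use A fCC cs finite_permutations[OF A] in blast)+
  also have "\<dots> = (\<Sum>C\<in>?CC. of_nat (Ncyc a C) * g (card C) * Sw g (A - C))"
  proof (rule sum.cong[OF refl])
    fix C assume C: "C \<in> ?CC"
    then have CA: "C \<subseteq> A" and aC: "a \<in> C" by auto
    let ?T = "{\<tau>. \<tau> permutes C \<and> cyc \<tau> a = C}"
    let ?R = "{\<rho>. \<rho> permutes (A - C)}"
    let ?m = "\<lambda>x. merge C (fst x) (snd x)"
    have bij: "bij_betw ?m (?T \<times> ?R) {\<sigma>\<in>?P. cyc \<sigma> a = C}"
    proof (rule bij_betw_byWitness[where f'="\<lambda>\<sigma>. (perm_restrict \<sigma> C, perm_restrict \<sigma> (A - C))"])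
      show "\<forall>x\<in>?T \<times> ?R. (perm_restrict (?m x) C, perm_restrict (?m x) (A - C)) = x"
      proof
        fix x assume x: "x \<in> ?T \<times> ?R"
        then obtain \<tau> \<rho> where x': "x = (\<tau>, \<rho>)" "\<tau> permutes C" "\<rho> permutes (A - C)" by auto
        have "perm_restrict (merge C \<tau> \<rho>) C = \<tau>"
          using x'(2) by (auto simp: perm_restrict_def merge_def fun_eq_iff permutes_not_in)
        moreover have "perm_restrict (merge C \<tau> \<rho>) (A - C) = \<rho>"
          using x'(3) by (auto simp: perm_restrict_def merge_def fun_eq_iff permutes_not_in)
        ultimately show "(perm_restrict (?m x) C, perm_restrict (?m x) (A - C)) = x" by (simp add: x')
      qed
      show "\<forall>\<sigma>\<in>{\<sigma>\<in>?P. cyc \<sigma> a = C}. ?m (perm_restrict \<sigma> C, perm_restrict \<sigma> (A - C)) = \<sigma>"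
        using split_props(4)[OF A _ aA] by auto
      show "?m ` (?T \<times> ?R) \<subseteq> {\<sigma>\<in>?P. cyc \<sigma> a = C}"
        using merge_props(1,2)[OF A CA aC] by auto
      show "(\<lambda>\<sigma>. (perm_restrict \<sigma> C, perm_restrict \<sigma> (A - C))) ` {\<sigma>\<in>?P. cyc \<sigma> a = C} \<subseteq> ?T \<times> ?R"
        using split_props(1,2,3)[OF A _ aA] by auto
    qed
    have "(\<Sum>\<sigma>\<in>{\<sigma>\<in>?P. cyc \<sigma> a = C}. wt g \<sigma> A) = (\<Sum>x\<in>?T \<times> ?R. wt g (?m x) A)"
      using sum.reindex_bij_betw[OF bij, of "\<lambda>\<sigma>. wt g \<sigma> A"] by simp
    also have "\<dots> = (\<Sum>x\<in>?T \<times> ?R. g (card C) * wt g (snd x) (A - C))"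
    proof (rule sum.cong[OF refl])
      fix x assume x: "x \<in> ?T \<times> ?R"
      then have t: "fst x permutes C" "cyc (fst x) a = C" and r: "snd x permutes (A - C)" by auto
      have "wt g (?m x) A = (\<Prod>D\<in>insert C (cycs (snd x) (A - C)). g (card D))"
        by (simp add: wt_def merge_props(3)[OF A CA aC t r])
      also have "\<dots> = g (card C) * wt g (snd x) (A - C)"
        using merge_props(4)[OF A CA aC t r] A by (simp add: wt_def finite_cycs)
      finally show "wt g (?m x) A = g (card C) * wt g (snd x) (A - C)" .
    qed
    also have "\<dots> = (\<Sum>\<tau>\<in>?T. \<Sum>\<rho>\<in>?R. g (card C) * wt g \<rho> (A - C))"
      by (rule sum.cartesian_product[symmetric, unfolded split_def])
    also have "\<dots> = of_nat (card ?T) * (g (card C) * Sw g (A - C))"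
      by (simp add: Sw_def sum_distrib_left)
    finally show "(\<Sum>\<sigma>\<in>{\<sigma>\<in>?P. cyc \<sigma> a = C}. wt g \<sigma> A) = of_nat (Ncyc a C) * g (card C) * Sw g (A - C)"
      by (simp add: Ncyc_def mult.assoc)
  qed
  finally show ?thesis .
qed

lemma Sw_one: "finite A \<Longrightarrow> Sw (\<lambda>_. 1::nat) A = fact (card A)"
  by (simp add: Sw_def wt_def card_permutations)

lemma fact_binom_id:
  assumes "1 \<le> k" "k \<le> n"
  shows "(n - 1 choose (k - 1)) * fact (k - 1) * fact (n - k) = (fact (n - 1) :: nat)"
proof -
  have "fact (k - 1) * fact ((n - 1) - (k - 1)) * (n - 1 choose (k - 1)) = (fact (n - 1) :: nat)"
    by (rule binomial_fact_lemma) (use assms in auto)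
  moreover have "(n - 1) - (k - 1) = n - k" using assms by auto
  ultimately show ?thesis by (simp add: ac_simps)
qed

lemma Ncyc_fact:
  assumes "finite C" "a \<in> C"
  shows "Ncyc a C = fact (card C - 1)"
  using assms
proof (induction "card C" arbitrary: C rule: less_induct)
  case less
  let ?n = "card C"
  let ?CC = "{D. a \<in> D \<and> D \<subseteq> C}"
  have fCC: "finite ?CC" by (rule finite_subset[of _ "Pow C"]) (use less.prems in auto)
  have n1: "1 \<le> ?n" using less.prems by (metis One_nat_def Suc_leI card_gt_0_iff empty_iff)
  have CinCC: "C \<in> ?CC" using less.prems by auto
  define X where "X = (\<Sum>D\<in>?CC - {C}. fact (card D - 1) * fact (?n - card D) :: nat)"
  have "fact ?n = Sw (\<lambda>_. 1::nat) C" using Sw_one[OF less.prems(1)] by simp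
  also have "\<dots> = (\<Sum>D\<in>?CC. of_nat (Ncyc a D) * 1 * Sw (\<lambda>_. 1::nat) (C - D))"
    by (rule Sw_decomp[OF less.prems])
  also have "\<dots> = (\<Sum>D\<in>?CC. Ncyc a D * fact (?n - card D))"
  proof (rule sum.cong[OF refl])
    fix D assume D: "D \<in> ?CC"
    then have "finite D" "D \<subseteq> C" using less.prems(1) finite_subset by auto
    then have "card (C - D) = ?n - card D" by (simp add: card_Diff_subset)
    then show "of_nat (Ncyc a D) * 1 * Sw (\<lambda>_. 1::nat) (C - D) = Ncyc a D * fact (?n - card D)"
      using Sw_one[of "C - D"] less.prems(1) by simp
  qed
  also have "\<dots> = Ncyc a C * fact (?n - ?n) + (\<Sum>D\<in>?CC - {C}. Ncyc a D * fact (?n - card D))"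
    by (subst sum.remove[OF fCC CinCC]) simp
  also have "(\<Sum>D\<in>?CC - {C}. Ncyc a D * fact (?n - card D)) = X"
    unfolding X_def
  proof (rule sum.cong[OF refl])
    fix D assume D: "D \<in> ?CC - {C}"
    then have "D \<subset> C" by auto
    then have "card D < ?n" "finite D" using less.prems(1) by (auto intro: psubset_card_mono finite_subset)
    then show "Ncyc a D * fact (?n - card D) = fact (card D - 1) * fact (?n - card D)"
      using less.hyps[of D] D by auto
  qed
  finally have e1: "fact ?n = Ncyc a C + X" by simp
  have "(\<Sum>D\<in>?CC. fact (card D - 1) * fact (?n - card D) :: nat) = (\<Sum>k\<in>{1..?n}. of_nat (?n - 1 choose (k - 1)) * (fact (k - 1) * fact (?n - k)))"
    by (rule sum_subsets_containing[OF less.prems])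
  also have "\<dots> = (\<Sum>k\<in>{1..?n}. fact (?n - 1))"
    by (rule sum.cong[OF refl]) (use fact_binom_id in \<open>auto simp: mult.assoc\<close>)
  also have "\<dots> = fact ?n" using n1 by (simp add: fact_reduce[of ?n])
  finally have "fact ?n = (\<Sum>D\<in>?CC. fact (card D - 1) * fact (?n - card D) :: nat)" by simp
  also have "\<dots> = fact (?n - 1) + X"
    by (subst sum.remove[OF fCC CinCC]) (simp add: X_def)
  finally show ?case using e1 by simp
qed

definition RS :: "(nat \<Rightarrow> 'a::comm_semiring_1) \<Rightarrow> nat \<Rightarrow> 'a" where
  "RS g n = (\<Sum>k\<in>{1..n}. of_nat (n - 1 choose (k - 1)) * (of_nat (fact (k - 1)) * g k * Sw g {..<n - k}))"

lemma Sw_rec_gen: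
  assumes A: "finite A" and aA: "a \<in> A"
    and IH: "\<And>B. finite B \<Longrightarrow> card B < card A \<Longrightarrow> Sw g B = Sw g {..<card B}"
  shows "Sw g A = RS g (card A)"
proof -
  let ?CC = "{D. a \<in> D \<and> D \<subseteq> A}"
  have "Sw g A = (\<Sum>D\<in>?CC. of_nat (Ncyc a D) * g (card D) * Sw g (A - D))"
    by (rule Sw_decomp[OF A aA])
  also have "\<dots> = (\<Sum>D\<in>?CC. of_nat (fact (card D - 1)) * g (card D) * Sw g {..<card A - card D})"
  proof (rule sum.cong[OF refl])
    fix D assume D: "D \<in> ?CC"
    then have fD: "finite D" using A finite_subset by auto
    have cd: "card (A - D) = card A - card D" using D fD by (simp add: card_Diff_subset)
    have "card D > 0" using D fD by (auto simp: card_gt_0_iff)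
    moreover have "card D \<le> card A" by (rule card_mono[OF A]) (use D in auto)
    ultimately have "card (A - D) < card A" using cd by linarith
    then have "Sw g (A - D) = Sw g {..<card A - card D}" using IH[of "A - D"] A cd by simp
    then show "of_nat (Ncyc a D) * g (card D) * Sw g (A - D) = of_nat (fact (card D - 1)) * g (card D) * Sw g {..<card A - card D}"
      using Ncyc_fact[OF fD] D by simp
  qed
  also have "\<dots> = RS g (card A)"
    unfolding RS_def by (rule sum_subsets_containing[OF A aA])
  finally show ?thesis .
qed

lemma Sw_card: "finite A \<Longrightarrow> Sw g A = Sw g {..<card A}"
proof (induction "card A" arbitrary: A rule: less_induct)
  case less
  show ?case
  proof (cases "A = {}")
    case True then show ?thesis by simp
  next
    case False
    then obtain a where aA: "a \<in> A" by auto
    have n0: "0 < card A" using less.prems False by auto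
    have IH: "\<And>B. finite B \<Longrightarrow> card B < card A \<Longrightarrow> Sw g B = Sw g {..<card B}"
      using less.hyps by blast
    have e1: "Sw g A = RS g (card A)" by (rule Sw_rec_gen[OF less.prems aA IH])
    have e2: "Sw g {..<card A} = RS g (card {..<card A})"
    proof (rule Sw_rec_gen[of "{..<card A}" 0])
      fix B :: "nat set" assume "finite B" "card B < card {..<card A}"
      then show "Sw g B = Sw g {..<card B}" using IH[of B] by simp
    qed (use n0 in simp_all)
    show ?thesis using e1 e2 by simp
  qed
qed

lemma Sw_rec: "0 < n \<Longrightarrow> Sw g {..<n} = RS g n"
proof -
  assume n: "0 < n"
  have "Sw g {..<n} = RS g (card {..<n})"
  proof (rule Sw_rec_gen[of "{..<n}" 0])
    fix B :: "nat set" assume "finite B"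
    then show "Sw g B = Sw g {..<card B}" by (rule Sw_card)
  qed (use n in simp_all)
  then show ?thesis by simp
qed


definition gc :: "rat \<Rightarrow> nat \<Rightarrow> symf" where
  "gc c k = (if odd k then sc c * psum k else 0)"

definition Zc :: "rat \<Rightarrow> nat \<Rightarrow> symf" where
  "Zc c n = sc (1 / fact n) * Sw (gc c) {..<n}"

lemma Zc0 [simp]: "Zc c 0 = 1"
  by (simp add: Zc_def Sw_empty)

lemma rat_fact_id:
  assumes "1 \<le> k" "k \<le> n"
  shows "of_nat n * (1 / fact n) * of_nat (n - 1 choose (k - 1)) * of_nat (fact (k - 1)) = (1 / fact (n - k) :: rat)"
proof -
  have e: "of_nat (n - 1 choose (k - 1)) * of_nat (fact (k - 1)) * (fact (n - k) :: rat) = fact (n - 1)"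
    using arg_cong[OF fact_binom_id[OF assms], of "of_nat :: nat \<Rightarrow> rat"] by (simp add: of_nat_mult)
  have fn: "(fact n :: rat) = of_nat n * fact (n - 1)" using assms by (metis fact_reduce le_trans not_one_le_zero gr0I)
  have "fact (n - k) \<noteq> (0::rat)" by simp
  moreover have "(fact (n - 1) :: rat) \<noteq> 0" by simp
  moreover have "of_nat n \<noteq> (0::rat)" using assms by simp
  ultimately show ?thesis using e fn by (simp add: field_simps)
qed

lemma Zc_rec:
  assumes n: "0 < n"
  shows "of_nat n * Zc c n = (\<Sum>k\<in>{1..n}. gc c k * Zc c (n - k))"
proof -
  have "of_nat n * Zc c n = sc (of_nat n * (1 / fact n)) * Sw (gc c) {..<n}"
    by (simp only: Zc_def sc_of_nat[symmetric] mult.assoc[symmetric] sc_mult)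
  also have "\<dots> = sc (of_nat n * (1 / fact n)) * RS (gc c) n" by (simp add: Sw_rec[OF n])
  also have "\<dots> = (\<Sum>k\<in>{1..n}. sc (of_nat n * (1 / fact n)) * (of_nat (n - 1 choose (k - 1)) * (of_nat (fact (k - 1)) * gc c k * Sw (gc c) {..<n - k})))"
    by (simp add: RS_def sum_distrib_left)
  also have "\<dots> = (\<Sum>k\<in>{1..n}. gc c k * Zc c (n - k))"
  proof (rule sum.cong[OF refl])
    fix k assume k: "k \<in> {1..n}"
    have "sc (of_nat n * (1 / fact n)) * (of_nat (n - 1 choose (k - 1)) * (of_nat (fact (k - 1)) * gc c k * Sw (gc c) {..<n - k}))
        = sc (of_nat n * (1 / fact n) * of_nat (n - 1 choose (k - 1)) * of_nat (fact (k - 1))) * (gc c k * Sw (gc c) {..<n - k})"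
      by (simp only: sc_of_nat[symmetric] mult.assoc[symmetric] sc_mult)
    also have "\<dots> = sc (1 / fact (n - k)) * (gc c k * Sw (gc c) {..<n - k})"
      using rat_fact_id[of k n] k by simp
    finally show "sc (of_nat n * (1 / fact n)) * (of_nat (n - 1 choose (k - 1)) * (of_nat (fact (k - 1)) * gc c k * Sw (gc c) {..<n - k}))
        = gc c k * Zc c (n - k)"
      by (simp add: Zc_def ac_simps)
  qed
  finally show ?thesis .
qed

lemma Zc_eq_div:
  assumes n: "0 < n"
  shows "Zc c n = sc (1 / of_nat n) * (\<Sum>k\<in>{1..n}. gc c k * Zc c (n - k))"
  using sc_inv_cancel[of n "Zc c n"] n by (simp add: Zc_rec[OF n])

lemma sym_valid_gc_mult: "sym_valid F \<Longrightarrow> 0 < k \<Longrightarrow> sym_valid (gc c k * F)"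
  by (auto simp: gc_def mult.assoc intro: sym_valid_sc sym_valid_psum_mult sym_valid_zero)

lemma sym_valid_Zc: "sym_valid (Zc c n)"
proof (induction n rule: less_induct)
  case (less n)
  show ?case
  proof (cases "n = 0")
    case True then show ?thesis by (simp add: sym_valid_one)
  next
    case False
    then show ?thesis
      by (subst Zc_eq_div) (auto intro!: sym_valid_sc sym_valid_sum sym_valid_gc_mult less.IH)
  qed
qed


definition deg :: "(nat \<Rightarrow>\<^sub>0 nat) \<Rightarrow> nat" where
  "deg \<alpha> = (\<Sum>i\<in>Poly_Mapping.keys \<alpha>. lka \<alpha> i)"

lemma deg_super: "finite S \<Longrightarrow> Poly_Mapping.keys \<alpha> \<subseteq> S \<Longrightarrow> deg \<alpha> = (\<Sum>i\<in>S. lka \<alpha> i)"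
  unfolding deg_def by (rule sum.mono_neutral_left) (auto simp: in_keys_iff)

lemma deg_minus:
  assumes i: "i \<in> Poly_Mapping.keys \<alpha>" and k: "k \<le> lka \<alpha> i"
  shows "deg (\<alpha> - Poly_Mapping.single i k) = deg \<alpha> - k" "k \<le> deg \<alpha>"
proof -
  let ?K = "Poly_Mapping.keys \<alpha>"
  have fK: "finite ?K" by simp
  have "k \<le> lka \<alpha> i" by (rule k)
  also have "lka \<alpha> i \<le> deg \<alpha>" unfolding deg_def by (rule member_le_sum) (use i in auto)
  finally show "k \<le> deg \<alpha>" .
  have "deg (\<alpha> - Poly_Mapping.single i k) = (\<Sum>j\<in>?K. lka \<alpha> j - (if i = j then k else 0))"
    by (subst deg_super[OF fK keys_minus_single_sub]) (simp add: lookup_minus_single)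
  also have "\<dots> = (\<Sum>j\<in>?K - {i}. lka \<alpha> j) + (lka \<alpha> i - k)"
    using sum.remove[OF fK i, of "\<lambda>j. lka \<alpha> j - (if i = j then k else 0)"] by (simp add: add.commute)
  also have "\<dots> = deg \<alpha> - k"
    using sum.remove[OF fK i, of "lka \<alpha>"] k by (simp add: deg_def)
  finally show "deg (\<alpha> - Poly_Mapping.single i k) = deg \<alpha> - k" .
qed

lemma keys_minus_single:
  assumes "0 < k" "k \<le> lka \<alpha> i"
  shows "Poly_Mapping.keys (\<alpha> - Poly_Mapping.single i k) =
    (if lka \<alpha> i = k then Poly_Mapping.keys \<alpha> - {i} else Poly_Mapping.keys \<alpha>)"
  using assms by (auto simp: in_keys_iff lookup_minus_single split: if_splits)

lemma deg_zero_iff: "deg \<alpha> = 0 \<longleftrightarrow> \<alpha> = 0"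
proof
  assume "deg \<alpha> = 0"
  then have z: "\<forall>i\<in>Poly_Mapping.keys \<alpha>. lka \<alpha> i = 0" unfolding deg_def by simp
  show "\<alpha> = 0"
  proof (rule poly_mapping_eqI)
    fix i show "lka \<alpha> i = lka 0 i"
      using z by (cases "i \<in> Poly_Mapping.keys \<alpha>") (auto simp: in_keys_iff)
  qed
qed (simp add: deg_def)

lemma oddsum: "(\<Sum>k\<in>{1..a}. if odd k then 2 else 0 :: rat) = of_nat a + (if odd a then 1 else 0)"
proof (induction a)
  case 0 then show ?case by simp
next
  case (Suc a)
  have "(\<Sum>k\<in>{1..Suc a}. if odd k then 2 else 0 :: rat) = (\<Sum>k\<in>{1..a}. if odd k then 2 else 0) + (if odd (Suc a) then 2 else 0)"
    by simp
  then show ?case using Suc by simp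
qed

lemma oddsum2:
  assumes "1 \<le> a"
  shows "(\<Sum>k\<in>{1..a}. if odd k then (if k = a then 1 else 2) else 0 :: rat) = of_nat a"
proof -
  have e: "{1..a} = insert a {1..a - 1}" using assms by auto
  have "(\<Sum>k\<in>{1..a}. if odd k then (if k = a then 1 else 2) else 0 :: rat)
      = (if odd a then 1 else 0) + (\<Sum>k\<in>{1..a - 1}. if odd k then (if k = a then 1 else 2) else 0)"
    unfolding e by (subst sum.insert) auto
  also have "(\<Sum>k\<in>{1..a - 1}. if odd k then (if k = a then 1 else 2) else 0 :: rat) = (\<Sum>k\<in>{1..a - 1}. if odd k then 2 else 0)"
    by (rule sum.cong) auto
  also have "\<dots> = of_nat (a - 1) + (if odd (a - 1) then 1 else 0)" by (rule oddsum)
  finally show ?thesis using assms by (cases "odd a") (auto simp: of_nat_diff)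
qed

definition Tg :: "nat \<Rightarrow> (nat \<Rightarrow>\<^sub>0 nat) \<Rightarrow> rat" where
  "Tg n \<alpha> = (if deg \<alpha> = n then 2 ^ card (Poly_Mapping.keys \<alpha>) else 0)"

lemma mexp_gc_mult:
  assumes "sym_valid F" "0 < k"
  shows "mexp (gc c k * F) \<alpha> = (if odd k then c * (\<Sum>i\<in>{i\<in>Poly_Mapping.keys \<alpha>. k \<le> lka \<alpha> i}. mexp F (\<alpha> - Poly_Mapping.single i k)) else 0)"
  using assms by (simp add: gc_def mult.assoc mexp_sc mexp_psum_mult mexp_zero)

lemma key_identity:
  "(\<Sum>k\<in>{1..n}. if odd k then 2 * (\<Sum>i\<in>{i\<in>Poly_Mapping.keys \<alpha>. k \<le> lka \<alpha> i}. Tg (n - k) (\<alpha> - Poly_Mapping.single i k)) else 0)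
    = of_nat n * Tg n \<alpha>"
proof -
  let ?K = "Poly_Mapping.keys \<alpha>"
  let ?t = "\<lambda>k i. if odd k \<and> k \<le> lka \<alpha> i then 2 * Tg (n - k) (\<alpha> - Poly_Mapping.single i k) else 0"
  have "(\<Sum>k\<in>{1..n}. if odd k then 2 * (\<Sum>i\<in>{i\<in>?K. k \<le> lka \<alpha> i}. Tg (n - k) (\<alpha> - Poly_Mapping.single i k)) else 0)
      = (\<Sum>k\<in>{1..n}. \<Sum>i\<in>?K. ?t k i)"
  proof (rule sum.cong[OF refl])
    fix k
    show "(if odd k then 2 * (\<Sum>i\<in>{i\<in>?K. k \<le> lka \<alpha> i}. Tg (n - k) (\<alpha> - Poly_Mapping.single i k)) else 0) = (\<Sum>i\<in>?K. ?t k i)"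
      by (simp add: sum.inter_filter sum_distrib_left if_distrib cong: if_cong)
  qed
  also have "\<dots> = (\<Sum>i\<in>?K. \<Sum>k\<in>{1..n}. ?t k i)" by (rule sum.swap)
  also have "\<dots> = of_nat n * Tg n \<alpha>"
  proof (cases "deg \<alpha> = n")
    case False
    have "?t k i = 0" if "i \<in> ?K" "k \<in> {1..n}" for i k
    proof -
      have "Tg (n - k) (\<alpha> - Poly_Mapping.single i k) = 0" if "k \<le> lka \<alpha> i"
        using deg_minus[OF \<open>i \<in> ?K\<close> that] \<open>k \<in> {1..n}\<close> False by (auto simp: Tg_def)
      then show ?thesis by auto
    qed
    then show ?thesis using False by (simp add: Tg_def)
  next
    case True
    define s where "s = card ?K"
    have inner: "(\<Sum>k\<in>{1..n}. ?t k i) = of_nat (lka \<alpha> i) * 2 ^ s" if i: "i \<in> ?K" for i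
    proof -
      let ?a = "lka \<alpha> i"
      have a1: "1 \<le> ?a" using i by (auto simp: in_keys_iff)
      have an: "?a \<le> n" using True deg_minus(2)[OF i order.refl] by simp
      have s1: "1 \<le> s" using i unfolding s_def by (metis One_nat_def Suc_leI card_gt_0_iff empty_iff finite_keys)
      have tk: "?t k i = (if odd k \<and> k \<le> ?a then 2 ^ s * (if k = ?a then 1 else 2) else 0)" if k: "k \<in> {1..n}" for k
      proof (cases "odd k \<and> k \<le> ?a")
        case True
        have d: "deg (\<alpha> - Poly_Mapping.single i k) = n - k" using deg_minus(1)[OF i] True \<open>deg \<alpha> = n\<close> by simp
        have ck: "card (Poly_Mapping.keys (\<alpha> - Poly_Mapping.single i k)) = (if ?a = k then s - 1 else s)"
          using keys_minus_single[of k \<alpha> i] True k i by (auto simp: s_def)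
        have "(2::rat) * 2 ^ (s - 1) = 2 ^ s" using s1 by (metis Suc_diff_le diff_Suc_1 power_Suc)
        then show ?thesis using True d ck by (auto simp: Tg_def)
      qed auto
      have "(\<Sum>k\<in>{1..n}. ?t k i) = (\<Sum>k\<in>{1..n}. if odd k \<and> k \<le> ?a then 2 ^ s * (if k = ?a then 1 else 2) else 0 :: rat)"
        by (rule sum.cong[OF refl]) (rule tk)
      also have "\<dots> = (\<Sum>k\<in>{1..?a}. if odd k \<and> k \<le> ?a then 2 ^ s * (if k = ?a then 1 else 2) else 0 :: rat)"
        by (rule sum.mono_neutral_right) (use an in auto)
      also have "\<dots> = 2 ^ s * (\<Sum>k\<in>{1..?a}. if odd k then (if k = ?a then 1 else 2) else 0 :: rat)"
        unfolding sum_distrib_left by (rule sum.cong) auto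
      also have "\<dots> = 2 ^ s * of_nat ?a" using oddsum2[OF a1] by simp
      finally show ?thesis by simp
    qed
    have "(\<Sum>i\<in>?K. \<Sum>k\<in>{1..n}. ?t k i) = (\<Sum>i\<in>?K. of_nat (lka \<alpha> i) * 2 ^ s)"
      by (rule sum.cong[OF refl]) (rule inner)
    also have "\<dots> = of_nat (deg \<alpha>) * 2 ^ s" by (simp add: deg_def sum_distrib_right)
    finally show ?thesis using True by (simp add: Tg_def s_def)
  qed
  finally show ?thesis .
qed

lemma mexp_Zc2: "mexp (Zc 2 n) \<alpha> = Tg n \<alpha>"
proof (induction n arbitrary: \<alpha> rule: less_induct)
  case (less n)
  show ?case
  proof (cases "n = 0")
    case True
    then show ?thesis by (auto simp: mexp_one Tg_def deg_zero_iff)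
  next
    case False
    then have n: "0 < n" by simp
    have "of_nat n * mexp (Zc 2 n) \<alpha> = mexp (of_nat n * Zc 2 n) \<alpha>"
      by (simp add: sc_of_nat[symmetric] mexp_sc)
    also have "\<dots> = (\<Sum>k\<in>{1..n}. mexp (gc 2 k * Zc 2 (n - k)) \<alpha>)"
      by (simp add: Zc_rec[OF n] mexp_sum)
    also have "\<dots> = (\<Sum>k\<in>{1..n}. if odd k then 2 * (\<Sum>i\<in>{i\<in>Poly_Mapping.keys \<alpha>. k \<le> lka \<alpha> i}. Tg (n - k) (\<alpha> - Poly_Mapping.single i k)) else 0)"
    proof (rule sum.cong[OF refl])
      fix k assume k: "k \<in> {1..n}"
      then have "n - k < n" by auto
      then show "mexp (gc 2 k * Zc 2 (n - k)) \<alpha> = (if odd k then 2 * (\<Sum>i\<in>{i\<in>Poly_Mapping.keys \<alpha>. k \<le> lka \<alpha> i}. Tg (n - k) (\<alpha> - Poly_Mapping.single i k)) else 0)"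
        using k by (simp add: mexp_gc_mult sym_valid_Zc less.IH)
    qed
    also have "\<dots> = of_nat n * Tg n \<alpha>" by (rule key_identity)
    finally show ?thesis using n by simp
  qed
qed

lemma K_coeff_eq: "K_coeff n = Zc 2 n"
proof -
  have P: "sym_valid (Zc 2 n) \<and> mexp (Zc 2 n) = (\<lambda>alpha. if (\<Sum>i\<in>Poly_Mapping.keys alpha. Poly_Mapping.lookup alpha i) = n
                         then 2 ^ card (Poly_Mapping.keys alpha) else 0)"
    by (auto simp: sym_valid_Zc mexp_Zc2 Tg_def deg_def fun_eq_iff)
  show ?thesis unfolding K_coeff_def
  proof (rule the_equality)
    show "sym_valid (Zc 2 n) \<and> mexp (Zc 2 n) = (\<lambda>alpha. if (\<Sum>i\<in>Poly_Mapping.keys alpha. Poly_Mapping.lookup alpha i) = n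
                         then 2 ^ card (Poly_Mapping.keys alpha) else 0)" by (rule P)
  next
    fix q assume q: "sym_valid q \<and> mexp q = (\<lambda>alpha. if (\<Sum>i\<in>Poly_Mapping.keys alpha. Poly_Mapping.lookup alpha i) = n
                         then 2 ^ card (Poly_Mapping.keys alpha) else 0)"
    show "q = Zc 2 n" using q P by (intro mexp_inj) auto
  qed
qed


section \<open>Power series of Zc\<close>

definition Zf :: "rat \<Rightarrow> symf fps" where "Zf c = Abs_fps (Zc c)"
definition Lf :: "rat \<Rightarrow> symf fps" where "Lf c = Abs_fps (\<lambda>m. gc c (Suc m))"

lemma Zf_nth [simp]: "Zf c $ n = Zc c n" by (simp add: Zf_def)
lemma Lf_nth [simp]: "Lf c $ n = gc c (Suc n)" by (simp add: Lf_def)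

lemma Zf_deriv: "fps_deriv (Zf c) = Lf c * Zf c"
proof (rule fps_ext)
  fix m
  have "fps_deriv (Zf c) $ m = of_nat (Suc m) * Zc c (Suc m)" by simp
  also have "\<dots> = (\<Sum>k\<in>{1..Suc m}. gc c k * Zc c (Suc m - k))" by (rule Zc_rec) simp
  also have "\<dots> = (\<Sum>k\<in>{Suc 0..Suc m}. gc c k * Zc c (Suc m - k))" by simp
  also have "\<dots> = (\<Sum>i\<in>{0..m}. gc c (Suc i) * Zc c (Suc m - Suc i))" by (rule sum.shift_bounds_cl_Suc_ivl)
  also have "\<dots> = (Lf c * Zf c) $ m" by (simp add: fps_mult_nth)
  finally show "fps_deriv (Zf c) $ m = (Lf c * Zf c) $ m" .
qed

lemma ode_unique:
  fixes A B L :: "symf fps"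
  assumes "fps_deriv A = L * A" "fps_deriv B = L * B" "A $ 0 = B $ 0"
  shows "A = B"
proof (rule fps_ext)
  fix n show "A $ n = B $ n"
  proof (induction n rule: less_induct)
    case (less n)
    show ?case
    proof (cases n)
      case 0 then show ?thesis using assms(3) by simp
    next
      case (Suc m)
      have "of_nat (Suc m) * A $ Suc m = (L * A) $ m" using arg_cong[OF assms(1), of "\<lambda>f. f $ m"] by simp
      also have "\<dots> = (L * B) $ m" unfolding fps_mult_nth
        by (rule sum.cong[OF refl]) (use less Suc in auto)
      also have "\<dots> = of_nat (Suc m) * B $ Suc m" using arg_cong[OF assms(2), of "\<lambda>f. f $ m"] by simp
      finally show ?thesis using of_nat_cancel_symf[of "Suc m"] Suc by blast
    qed
  qed
qed

lemma gc_add: "gc (c + d) k = gc c k + gc d k"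
  by (simp add: gc_def sc_add distrib_right)
lemma gc_uminus: "gc (- c) k = - gc c k"
  by (simp add: gc_def sc_def single_uminus)
lemma gc_zero: "gc 0 k = 0"
  by (simp add: gc_def)

lemma Lf_add: "Lf (c + d) = Lf c + Lf d"
  by (rule fps_ext) (simp add: gc_add)
lemma Lf_zero: "Lf 0 = 0"
  by (rule fps_ext) (simp add: gc_zero)

lemma Zf_mult: "Zf c * Zf d = Zf (c + d)"
proof (rule ode_unique[where L="Lf (c + d)"])
  show "fps_deriv (Zf c * Zf d) = Lf (c + d) * (Zf c * Zf d)"
    by (simp add: Zf_deriv Lf_add algebra_simps)
  show "fps_deriv (Zf (c + d)) = Lf (c + d) * Zf (c + d)" by (rule Zf_deriv)
qed simp

lemma Zf_zero: "Zf 0 = 1"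
  by (rule ode_unique[where L="Lf 0"]) (simp_all add: Zf_deriv Lf_zero)

lemma Zf_power: "Zf c ^ m = Zf (of_nat m * c)"
  by (induction m) (simp_all add: Zf_zero Zf_mult algebra_simps)

lemma compose_neg_X_nth: "(A oo - fps_X) $ n = (- 1) ^ n * (A $ n :: symf)"
proof -
  have p: "((- fps_X :: symf fps) ^ i) $ n = (if i = n then (- 1) ^ n else 0)" for i
  proof (induction i arbitrary: n)
    case 0 then show ?case by simp
  next
    case (Suc i)
    have "(- fps_X :: symf fps) ^ Suc i = - (fps_X * (- fps_X) ^ i)" by simp
    then show ?case using Suc by (cases n) auto
  qed
  have "(A oo - fps_X) $ n = (\<Sum>i\<in>{0..n}. A $ i * (if i = n then (- 1) ^ n else 0))"
    by (simp add: fps_compose_nth p)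
  also have "\<dots> = (- 1) ^ n * A $ n" by (simp add: if_distrib[of "(*) _"] sum.delta' mult.commute cong: if_cong)
  finally show ?thesis .
qed

lemma Lf_compose_neg: "Lf c oo - fps_X = Lf c"
proof (rule fps_ext)
  fix n show "(Lf c oo - fps_X) $ n = Lf c $ n"
    by (cases "even n") (auto simp: compose_neg_X_nth gc_def)
qed

lemma Zf_compose_neg: "Zf c oo - fps_X = Zf (- c)"
proof (rule ode_unique[where L="Lf (- c)"])
  have m0: "(- fps_X :: symf fps) $ 0 = 0" by simp
  have "fps_deriv (Zf c oo - fps_X) = (fps_deriv (Zf c) oo - fps_X) * fps_deriv (- fps_X)"
    by (rule fps_compose_deriv[OF m0])
  also have "\<dots> = - ((Lf c oo - fps_X) * (Zf c oo - fps_X))"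
    by (simp add: Zf_deriv fps_compose_mult_distrib[OF m0])
  also have "\<dots> = Lf (- c) * (Zf c oo - fps_X)"
  proof -
    have "Lf (- c) = - Lf c" by (rule fps_ext) (simp add: gc_uminus)
    then show ?thesis by (simp add: Lf_compose_neg)
  qed
  finally show "fps_deriv (Zf c oo - fps_X) = Lf (- c) * (Zf c oo - fps_X)" .
  show "fps_deriv (Zf (- c)) = Lf (- c) * Zf (- c)" by (rule Zf_deriv)
qed simp

section \<open>Composition lemmas\<close>

lemma compose_mult_nth:
  fixes A G B :: "symf fps"
  assumes G0: "G $ 0 = 0"
  shows "((A oo G) * B) $ m = (\<Sum>j\<in>{0..m}. A $ j * (G ^ j * B) $ m)"
proof -
  have "((A oo G) * B) $ m = (\<Sum>i\<in>{0..m}. (\<Sum>j\<in>{0..i}. A $ j * (G ^ j) $ i) * B $ (m - i))"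
    by (simp add: fps_mult_nth fps_compose_nth)
  also have "\<dots> = (\<Sum>i\<in>{0..m}. \<Sum>j\<in>{0..m}. A $ j * ((G ^ j) $ i * B $ (m - i)))"
  proof (rule sum.cong[OF refl])
    fix i assume i: "i \<in> {0..m}"
    have "(\<Sum>j\<in>{0..i}. A $ j * (G ^ j) $ i) = (\<Sum>j\<in>{0..m}. A $ j * (G ^ j) $ i)"
      by (rule sum.mono_neutral_left) (use i startsby_zero_power_prefix[OF G0] in auto)
    then show "(\<Sum>j\<in>{0..i}. A $ j * (G ^ j) $ i) * B $ (m - i) = (\<Sum>j\<in>{0..m}. A $ j * ((G ^ j) $ i * B $ (m - i)))"
      by (simp add: sum_distrib_right mult.assoc)
  qed
  also have "\<dots> = (\<Sum>j\<in>{0..m}. A $ j * (G ^ j * B) $ m)"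
    by (subst sum.swap) (simp add: fps_mult_nth sum_distrib_left)
  finally show ?thesis .
qed

lemma power_phi_psi:
  fixes \<phi> \<psi> :: "symf fps"
  assumes "\<phi> * \<psi> = 1" "j \<le> n"
  shows "(fps_X * \<psi>) ^ j * \<phi> ^ n = fps_X ^ j * \<phi> ^ (n - j)"
proof -
  have "\<phi> ^ n = \<phi> ^ j * \<phi> ^ (n - j)" using assms(2) by (simp add: power_add[symmetric])
  then have "(fps_X * \<psi>) ^ j * \<phi> ^ n = fps_X ^ j * (\<phi> * \<psi>) ^ j * \<phi> ^ (n - j)"
    by (simp add: power_mult_distrib algebra_simps)
  then show ?thesis using assms(1) by simp
qed

lemma lagrange_key:
  fixes \<phi> \<psi> :: "symf fps"
  assumes pp: "\<phi> * \<psi> = 1" and r: "1 \<le> r"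
  shows "(\<phi> ^ r * fps_deriv (fps_X * \<psi>)) $ (r - 1) = (if r = 1 then 1 else 0)"
proof -
  have d1: "fps_deriv \<phi> * \<psi> + \<phi> * fps_deriv \<psi> = 0"
    using arg_cong[OF pp, of fps_deriv] by (simp add: algebra_simps)
  have G': "fps_deriv (fps_X * \<psi>) = \<psi> + fps_X * fps_deriv \<psi>" by (simp add: algebra_simps)
  have e: "\<phi> ^ r * fps_deriv (fps_X * \<psi>) = \<phi> ^ (r - 1) + fps_X * (\<phi> ^ r * fps_deriv \<psi>)"
  proof -
    have "\<phi> ^ r = \<phi> ^ (r - 1) * \<phi>" using r by (metis One_nat_def Suc_pred' less_le_trans less_numeral_extra(1) power_Suc2)
    then have "\<phi> ^ r * \<psi> = \<phi> ^ (r - 1)" using pp by (simp add: mult.assoc)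
    then show ?thesis by (simp add: G' algebra_simps)
  qed
  show ?thesis
  proof (cases "r = 1")
    case True then show ?thesis using arg_cong[OF pp, of "\<lambda>f. f $ 0"] by (simp add: e)
  next
    case False
    then have r2: "2 \<le> r" using r by simp
    define q where "q = r - 2"
    have rq: "r = Suc (Suc q)" using r2 by (simp add: q_def)
    have "\<phi> ^ r * fps_deriv \<psi> = \<phi> ^ Suc q * (\<phi> * fps_deriv \<psi>)" by (simp add: rq algebra_simps)
    also have "\<phi> * fps_deriv \<psi> = - (fps_deriv \<phi> * \<psi>)" using d1 by (simp add: eq_neg_iff_add_eq_0 add.commute)
    also have "\<phi> ^ Suc q * - (fps_deriv \<phi> * \<psi>) = - (\<phi> ^ q * fps_deriv \<phi> * (\<phi> * \<psi>))" by (simp add: algebra_simps)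
    finally have e2: "\<phi> ^ r * fps_deriv \<psi> = - (\<phi> ^ q * fps_deriv \<phi>)" using pp by simp
    have der0: "fps_deriv (\<phi> ^ Suc q) = of_nat (Suc q) * fps_deriv \<phi> * \<phi> ^ q"
      by (metis fps_deriv_power' diff_Suc_1)
    have der: "fps_deriv (\<phi> ^ Suc q) = of_nat (Suc q) * (\<phi> ^ q * fps_deriv \<phi>)"
      unfolding der0 by (simp only: ac_simps)
    have "of_nat (Suc q) * (\<phi> ^ q * fps_deriv \<phi>) $ q = (of_nat (Suc q) * (\<phi> ^ q * fps_deriv \<phi>)) $ q"
      by (simp flip: fps_of_nat)
    also have "\<dots> = fps_deriv (\<phi> ^ Suc q) $ q" by (simp only: der)
    also have "\<dots> = of_nat (Suc q) * (\<phi> ^ Suc q) $ Suc q" by (simp only: fps_deriv_nth Suc_eq_plus1)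
    finally have "(\<phi> ^ q * fps_deriv \<phi>) $ q = (\<phi> ^ Suc q) $ Suc q" using of_nat_cancel_symf[of "Suc q"] by blast
    then have z: "(\<phi> ^ Suc q) $ Suc q + (- (\<phi> ^ q * fps_deriv \<phi>)) $ q = 0" by simp
    have "(\<phi> ^ r * fps_deriv (fps_X * \<psi>)) $ (r - 1) = (\<phi> ^ (r - 1)) $ (r - 1) + (fps_X * (\<phi> ^ r * fps_deriv \<psi>)) $ (r - 1)"
      by (simp only: e fps_add_nth)
    also have "\<dots> = (\<phi> ^ Suc q) $ Suc q + (- (\<phi> ^ q * fps_deriv \<phi>)) $ q"
      by (simp only: e2) (simp add: rq)
    finally show ?thesis using z False by simp
  qed
qed

lemma lagrange:
  fixes \<phi> \<psi> H :: "symf fps"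
  assumes pp: "\<phi> * \<psi> = 1" and H0: "H $ 0 = 0" and HG: "H oo (fps_X * \<psi>) = fps_X"
  shows "of_nat (Suc m) * H $ Suc m = (\<phi> ^ Suc m) $ m"
proof -
  define G where "G = fps_X * \<psi>"
  have G0: "G $ 0 = 0" by (simp add: G_def)
  have "fps_deriv (H oo G) = 1" using HG by (simp add: G_def)
  then have dd: "(fps_deriv H oo G) * fps_deriv G = 1" using fps_compose_deriv[OF G0, of H] by simp
  have "\<phi> ^ Suc m = ((fps_deriv H oo G) * fps_deriv G) * \<phi> ^ Suc m" by (simp only: dd mult_1_left)
  also have "\<dots> = (fps_deriv H oo G) * (fps_deriv G * \<phi> ^ Suc m)" by (simp only: mult.assoc)
  finally have "(\<phi> ^ Suc m) $ m = ((fps_deriv H oo G) * (fps_deriv G * \<phi> ^ Suc m)) $ m"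
    by (rule arg_cong[where f="\<lambda>x. x $ m"])
  also have "\<dots> = (\<Sum>j\<in>{0..m}. fps_deriv H $ j * (G ^ j * (fps_deriv G * \<phi> ^ Suc m)) $ m)"
    by (rule compose_mult_nth[OF G0])
  also have "\<dots> = (\<Sum>j\<in>{0..m}. fps_deriv H $ j * (if j = m then 1 else 0))"
  proof (rule sum.cong[OF refl])
    fix j assume j: "j \<in> {0..m}"
    have "G ^ j * (fps_deriv G * \<phi> ^ Suc m) = (G ^ j * \<phi> ^ Suc m) * fps_deriv G" by (simp only: ac_simps)
    also have "\<dots> = fps_X ^ j * \<phi> ^ (Suc m - j) * fps_deriv G"
      unfolding G_def using power_phi_psi[OF pp, of j "Suc m"] j by simp
    also have "\<dots> = fps_X ^ j * (\<phi> ^ (Suc m - j) * fps_deriv G)" by (simp only: mult.assoc)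
    finally have "G ^ j * (fps_deriv G * \<phi> ^ Suc m) = fps_X ^ j * (\<phi> ^ (Suc m - j) * fps_deriv G)" .
    then have "(G ^ j * (fps_deriv G * \<phi> ^ Suc m)) $ m = (fps_X ^ j * (\<phi> ^ (Suc m - j) * fps_deriv G)) $ m"
      by (rule arg_cong[where f="\<lambda>x. x $ m"])
    also have "\<dots> = (\<phi> ^ (Suc m - j) * fps_deriv G) $ (Suc m - j - 1)"
      using j by (simp only: fps_X_power_mult_nth) simp
    also have "\<dots> = (if Suc m - j = 1 then 1 else 0)"
      unfolding G_def by (rule lagrange_key[OF pp]) (use j in simp)
    finally show "fps_deriv H $ j * (G ^ j * (fps_deriv G * \<phi> ^ Suc m)) $ m = fps_deriv H $ j * (if j = m then 1 else 0)"
      using j by auto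
  qed
  also have "\<dots> = fps_deriv H $ m" by (simp add: if_distrib[of "(*) _"] cong: if_cong)
  also have "\<dots> = of_nat (Suc m) * H $ Suc m" by simp
  finally show ?thesis by simp
qed

function linv :: "symf fps \<Rightarrow> nat \<Rightarrow> symf" where
  "linv G n = (if n = 0 then 0 else (if n = 1 then 1 else 0) - (\<Sum>j<n. linv G j * (G ^ j) $ n))"
  by auto
termination by (relation "measure snd") auto

lemma left_inverse_exists:
  fixes G :: "symf fps"
  assumes G0: "G $ 0 = 0" and G1: "G $ 1 = 1"
  shows "\<exists>H. H $ 0 = 0 \<and> H oo G = fps_X"
proof (intro exI conjI)
  define H where "H = Abs_fps (linv G)"
  show "H $ 0 = 0" by (simp add: H_def)
  show "H oo G = fps_X"
  proof (rule fps_ext)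
    fix n
    show "(H oo G) $ n = fps_X $ n"
    proof (cases "n = 0")
      case True then show ?thesis by (simp add: H_def)
    next
      case False
      have "(H oo G) $ n = (\<Sum>j\<in>{0..<n}. linv G j * (G ^ j) $ n) + linv G n * (G ^ n) $ n"
        by (simp add: fps_compose_nth H_def atLeastLessThanSuc_atLeastAtMost[symmetric])
      also have "(G ^ n) $ n = 1" using startsby_zero_power_nth_same[OF G0, of n] G1 by simp
      also have "linv G n = (if n = 1 then 1 else 0) - (\<Sum>j<n. linv G j * (G ^ j) $ n)"
        using False by simp
      finally show ?thesis using False by (simp add: atLeast0LessThan fps_X_def)
    qed
  qed
qed


section \<open>Parking functions via counts\<close>

lemma sorted_count_iff:
  assumes s: "sorted xs" and n: "length xs = n"
  shows "(\<forall>i<n. xs ! i \<le> i + 1) \<longleftrightarrow> (\<forall>j\<in>{1..n}. j \<le> card {i. i < n \<and> xs ! i \<le> j})"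
proof
  assume H: "\<forall>i<n. xs ! i \<le> i + 1"
  show "\<forall>j\<in>{1..n}. j \<le> card {i. i < n \<and> xs ! i \<le> j}"
  proof
    fix j assume j: "j \<in> {1..n}"
    have "{..<j} \<subseteq> {i. i < n \<and> xs ! i \<le> j}"
    proof
      fix i assume i: "i \<in> {..<j}"
      then have "xs ! i \<le> xs ! (j - 1)" using s j n by (intro sorted_nth_mono) auto
      also have "\<dots> \<le> j" using H[rule_format, of "j - 1"] j by auto
      finally show "i \<in> {i. i < n \<and> xs ! i \<le> j}" using i j by auto
    qed
    then show "j \<le> card {i. i < n \<and> xs ! i \<le> j}" using card_mono[of "{i. i < n \<and> xs ! i \<le> j}" "{..<j}"] by auto
  qed
next
  assume H: "\<forall>j\<in>{1..n}. j \<le> card {i. i < n \<and> xs ! i \<le> j}"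
  show "\<forall>i<n. xs ! i \<le> i + 1"
  proof (intro allI impI, rule ccontr)
    fix i assume i: "i < n" and c: "\<not> xs ! i \<le> i + 1"
    have "{i'. i' < n \<and> xs ! i' \<le> i + 1} \<subseteq> {..<i}"
    proof
      fix i' assume i': "i' \<in> {i'. i' < n \<and> xs ! i' \<le> i + 1}"
      show "i' \<in> {..<i}"
      proof (rule ccontr)
        assume "i' \<notin> {..<i}"
        then have "xs ! i \<le> xs ! i'" using s i' n by (intro sorted_nth_mono) auto
        then show False using c i' by auto
      qed
    qed
    then have "card {i'. i' < n \<and> xs ! i' \<le> i + 1} \<le> i" using card_mono[of "{..<i}"] by fastforce
    moreover have "i + 1 \<le> card {i'. i' < n \<and> xs ! i' \<le> i + 1}" using H i by auto
    ultimately show False by simp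
  qed
qed

lemma card_filter_nth: "card {i. i < length xs \<and> P (xs ! i)} = length (filter P xs)"
  by (simp add: length_filter_conv_card)

lemma parking_iff:
  "a \<in> parking n \<longleftrightarrow> length a = n \<and> (\<forall>x\<in>set a. 0 < x) \<and> (\<forall>j\<in>{1..n}. j \<le> card {i. i < n \<and> a ! i \<le> j})"
proof -
  have "length (filter (\<lambda>x. x \<le> j) (sort a)) = length (filter (\<lambda>x. x \<le> j) a)" for j
    by (metis mset_filter mset_sort size_mset)
  then have c: "card {i. i < length a \<and> sort a ! i \<le> j} = card {i. i < length a \<and> a ! i \<le> j}" for j
    using card_filter_nth[of "sort a" "\<lambda>x. x \<le> j"] card_filter_nth[of a "\<lambda>x. x \<le> j"] by (simp only: length_sort)
  show ?thesis
    unfolding parking_def using sorted_count_iff[of "sort a" n] c by auto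
qed

lemma parking_bounds: "a \<in> parking n \<Longrightarrow> x \<in> set a \<Longrightarrow> 0 < x \<and> x \<le> n"
proof -
  assume a: "a \<in> parking n" and x: "x \<in> set a"
  then have len: "length a = n" and pos: "\<forall>x\<in>set a. 0 < x" and so: "\<forall>i<n. sort a ! i \<le> i + 1"
    by (auto simp: parking_def)
  have "x \<in> set (sort a)" using x by simp
  then obtain i where i: "i < n" "sort a ! i = x" using len by (metis in_set_conv_nth length_sort)
  then show ?thesis using so pos x by fastforce
qed

section \<open>Cycle lemma\<close>

definition Cond :: "(nat \<Rightarrow> nat) \<Rightarrow> nat \<Rightarrow> nat \<Rightarrow> bool" where
  "Cond c n s \<longleftrightarrow> (\<forall>j\<in>{1..n}. j \<le> c (s + j) - c s + c (s + j - Suc n))"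

lemma cycle_lemma:
  fixes c :: "nat \<Rightarrow> nat"
  assumes mono: "\<And>x y. x \<le> y \<Longrightarrow> c x \<le> c y" and c0: "c 0 = 0" and cN: "\<And>m. Suc n \<le> m \<Longrightarrow> c m = n"
  shows "\<exists>!s. s < Suc n \<and> Cond c n s"
proof -
  define N where "N = Suc n"
  define D where "D m = int (c m) - int m" for m
  define FM where "FM s \<longleftrightarrow> (\<forall>m<s. D m > D s) \<and> (\<forall>m. s < m \<and> m < N \<longrightarrow> D m \<ge> D s)" for s
  have equiv: "Cond c n s \<longleftrightarrow> FM s" if sN: "s < N" for s
  proof
    assume C: "Cond c n s"
    have Cj: "int j \<le> int (c (s + j)) - int (c s) + int (c (s + j - N))" if "1 \<le> j" "j \<le> n" for j
    proof -
      have "j \<le> c (s + j) - c s + c (s + j - N)" using C that by (auto simp: Cond_def N_def)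
      moreover have "c s \<le> c (s + j)" using mono[of s "s + j"] by simp
      ultimately show ?thesis by linarith
    qed
    show "FM s" unfolding FM_def
    proof (intro conjI allI impI)
      fix m assume m: "m < s"
      show "D m > D s"
      proof (cases "m = 0")
        case True
        have "int (N - s) \<le> int (c (s + (N - s))) - int (c s) + int (c (s + (N - s) - N))"
          using Cj[of "N - s"] m sN by (auto simp: N_def)
        moreover have "c (s + (N - s)) = n" using cN sN by (simp add: N_def)
        moreover have "c (s + (N - s) - N) = 0" using sN c0 by simp
        ultimately show ?thesis using True sN c0 by (simp add: D_def N_def of_nat_diff)
      next
        case False
        have "int (m + N - s) \<le> int (c (s + (m + N - s))) - int (c s) + int (c (s + (m + N - s) - N))"
          using Cj[of "m + N - s"] m sN False by (auto simp: N_def)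
        moreover have "c (s + (m + N - s)) = n" using cN sN m by (simp add: N_def)
        moreover have "s + (m + N - s) - N = m" using m sN by simp
        ultimately show ?thesis using m sN by (simp add: D_def N_def of_nat_diff)
      qed
    next
      fix m assume m: "s < m \<and> m < N"
      have "int (m - s) \<le> int (c (s + (m - s))) - int (c s) + int (c (s + (m - s) - N))"
        using Cj[of "m - s"] m by (auto simp: N_def)
      moreover have "s + (m - s) = m" using m by simp
      moreover have "c (m - N) = 0" using m c0 by simp
      ultimately show "D m \<ge> D s" using m by (simp add: D_def of_nat_diff)
    qed
  next
    assume F: "FM s"
    show "Cond c n s" unfolding Cond_def
    proof
      fix j assume j: "j \<in> {1..n}"
      have ms: "c s \<le> c (s + j)" by (rule mono) simp
      show "j \<le> c (s + j) - c s + c (s + j - Suc n)"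
      proof (cases "s + j < N")
        case True
        then have "D (s + j) \<ge> D s" using F j by (auto simp: FM_def)
        moreover have "c (s + j - Suc n) = 0" using True c0 by (simp add: N_def)
        ultimately show ?thesis using ms by (simp add: D_def)
      next
        case False
        define m where "m = s + j - N"
        have mlt: "m < s" using j False by (auto simp: m_def N_def)
        then have "D m > D s" using F by (auto simp: FM_def)
        then have dd: "int (c m) - int m > int (c s) - int s" by (simp add: D_def)
        have e1: "c (s + j) = n" using False cN by (simp add: N_def)
        have e2: "s + j - Suc n = m" using False by (simp add: m_def N_def)
        have e3: "s + j = m + N" using False by (simp add: m_def)
        show ?thesis unfolding e1 e2 using ms e1 e3 dd N_def by linarith
      qed
    qed
  qed
  define \<mu> where "\<mu> = Min (D ` {..<N})"
  have \<mu>in: "\<mu> \<in> D ` {..<N}" unfolding \<mu>_def by (rule Min_in) (auto simp: N_def)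
  have \<mu>le: "\<mu> \<le> D m" if "m < N" for m unfolding \<mu>_def using that by (intro Min_le) auto
  define s0 where "s0 = (LEAST s. s < N \<and> D s = \<mu>)"
  have ex: "\<exists>s. s < N \<and> D s = \<mu>" using \<mu>in by auto
  have s0: "s0 < N \<and> D s0 = \<mu>" unfolding s0_def by (rule LeastI_ex[OF ex])
  have s0least: "\<not> (m < N \<and> D m = \<mu>)" if "m < s0" for m
    using not_less_Least[of m "\<lambda>s. s < N \<and> D s = \<mu>"] that unfolding s0_def by simp
  have FMs0: "FM s0" unfolding FM_def
  proof (intro conjI allI impI)
    fix m assume m: "m < s0"
    then have "m < N" using s0 by simp
    then have "D m \<noteq> \<mu>" using s0least[OF m] by blast
    then show "D m > D s0" using \<mu>le[of m] s0 \<open>m < N\<close> by simp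
  next
    fix m assume "s0 < m \<and> m < N"
    then show "D m \<ge> D s0" using \<mu>le s0 by simp
  qed
  have uniq: "s = s'" if "s < N" "FM s" "s' < N" "FM s'" for s s'
  proof (rule ccontr)
    assume "s \<noteq> s'"
    then consider "s < s'" | "s' < s" by linarith
    then show False
    proof cases
      case 1
      then have "D s > D s'" using that(4) by (auto simp: FM_def)
      moreover have "D s' \<ge> D s" using that(2,3) 1 by (auto simp: FM_def)
      ultimately show False by simp
    next
      case 2
      then have "D s' > D s" using that(2) by (auto simp: FM_def)
      moreover have "D s \<ge> D s'" using that(1,4) 2 by (auto simp: FM_def)
      ultimately show False by simp
    qed
  qed
  show ?thesis
  proof (rule ex1I[of _ s0])
    show "s0 < Suc n \<and> Cond c n s0" using s0 FMs0 equiv by (auto simp: N_def)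
  next
    fix s assume "s < Suc n \<and> Cond c n s"
    then show "s = s0" using uniq[of s s0] s0 FMs0 equiv by (auto simp: N_def)
  qed
qed


definition rot :: "nat \<Rightarrow> nat \<Rightarrow> nat list \<Rightarrow> nat list" where
  "rot n s b = map (\<lambda>v. Suc ((v + Suc n - s) mod Suc n)) b"
definition unrot :: "nat \<Rightarrow> nat \<Rightarrow> nat list \<Rightarrow> nat list" where
  "unrot n s a = map (\<lambda>x. (x - 1 + s) mod Suc n) a"
definition cl :: "nat \<Rightarrow> nat list \<Rightarrow> nat \<Rightarrow> nat" where
  "cl n b m = card {i. i < n \<and> b ! i < m}"

lemma rot_elem:
  assumes v: "v < Suc n" and s: "s < Suc n" and j: "j \<le> n"
  shows "Suc ((v + Suc n - s) mod Suc n) \<le> j \<longleftrightarrow> (s \<le> v \<and> v < s + j) \<or> v < s + j - Suc n"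
proof (cases "s \<le> v")
  case True
  have e: "v + Suc n - s = v - s + Suc n" using True by arith
  have "(v + Suc n - s) mod Suc n = (v - s + Suc n) mod Suc n" by (simp only: e)
  also have "\<dots> = (v - s) mod Suc n" by (rule mod_add_self2)
  also have "\<dots> = v - s" using v by simp
  finally have m: "(v + Suc n - s) mod Suc n = v - s" .
  show ?thesis unfolding m using True j s by arith
next
  case False
  have m: "(v + Suc n - s) mod Suc n = v + Suc n - s" using False by simp
  show ?thesis unfolding m using False j s by arith
qed

lemma count_rot:
  assumes len: "length b = n" and vals: "\<forall>v\<in>set b. v < Suc n" and s: "s < Suc n" and j: "j \<le> n"
  shows "card {i. i < n \<and> rot n s b ! i \<le> j} = cl n b (s + j) - cl n b s + cl n b (s + j - Suc n)"
proof -
  have bi: "b ! i < Suc n" if "i < n" for i using vals len that by auto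
  have sj: "s + j - Suc n < s \<or> s + j - Suc n = 0" using s j by arith
  have sj2: "x < s" if "x < s + j - Suc n" for x using sj that by auto
  have r: "rot n s b ! i \<le> j \<longleftrightarrow> (s \<le> b ! i \<and> b ! i < s + j) \<or> b ! i < s + j - Suc n" if i: "i < n" for i
  proof -
    have "rot n s b ! i = Suc ((b ! i + Suc n - s) mod Suc n)" using i len by (simp add: rot_def)
    then show ?thesis using rot_elem[OF bi[OF i] s j] by (simp only:)
  qed
  have eq: "{i. i < n \<and> rot n s b ! i \<le> j} = ({i. i < n \<and> b ! i < s + j} - {i. i < n \<and> b ! i < s}) \<union> {i. i < n \<and> b ! i < s + j - Suc n}"
  proof -
    show ?thesis
    proof (rule set_eqI)
      fix i show "i \<in> {i. i < n \<and> rot n s b ! i \<le> j} \<longleftrightarrow> i \<in> ({i. i < n \<and> b ! i < s + j} - {i. i < n \<and> b ! i < s}) \<union> {i. i < n \<and> b ! i < s + j - Suc n}"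
        using r[of i] sj2[of "b ! i"] by auto
    qed
  qed
  have disj: "({i. i < n \<and> b ! i < s + j} - {i. i < n \<and> b ! i < s}) \<inter> {i. i < n \<and> b ! i < s + j - Suc n} = {}"
    by (auto dest: sj2)
  have "card {i. i < n \<and> rot n s b ! i \<le> j} = card ({i. i < n \<and> b ! i < s + j} - {i. i < n \<and> b ! i < s}) + card {i. i < n \<and> b ! i < s + j - Suc n}"
    unfolding eq by (rule card_Un_disjoint) (use disj in auto)
  also have "card ({i. i < n \<and> b ! i < s + j} - {i. i < n \<and> b ! i < s}) = cl n b (s + j) - cl n b s"
    unfolding cl_def by (rule card_Diff_subset) auto
  finally show ?thesis by (simp add: cl_def)
qed

lemma rot_parking_iff:
  assumes len: "length b = n" and vals: "\<forall>v\<in>set b. v < Suc n" and s: "s < Suc n"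
  shows "rot n s b \<in> parking n \<longleftrightarrow> Cond (cl n b) n s"
  unfolding parking_iff Cond_def using count_rot[OF len vals s] len by (auto simp: rot_def)

lemma cl_props:
  assumes len: "length b = n" and vals: "\<forall>v\<in>set b. v < Suc n"
  shows "\<And>x y. x \<le> y \<Longrightarrow> cl n b x \<le> cl n b y" "cl n b 0 = 0" "\<And>m. Suc n \<le> m \<Longrightarrow> cl n b m = n"
proof -
  fix x y :: nat assume "x \<le> y"
  then show "cl n b x \<le> cl n b y" unfolding cl_def by (intro card_mono) auto
next
  show "cl n b 0 = 0" by (simp add: cl_def)
next
  fix m assume m: "Suc n \<le> m"
  have "b ! i < m" if "i < n" for i
  proof -
    have "b ! i \<in> set b" using that len by simp
    then show ?thesis using vals m by auto
  qed
  then have "{i. i < n \<and> b ! i < m} = {..<n}" by auto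
  then show "cl n b m = n" by (simp add: cl_def)
qed

lemma unique_rot:
  assumes len: "length b = n" and vals: "\<forall>v\<in>set b. v < Suc n"
  shows "\<exists>!s. s < Suc n \<and> rot n s b \<in> parking n"
proof -
  have "\<exists>!s. s < Suc n \<and> Cond (cl n b) n s" by (rule cycle_lemma) (use cl_props[OF len vals] in auto)
  then show ?thesis using rot_parking_iff[OF len vals] by metis
qed

lemma mod_back1:
  assumes "1 \<le> x" "x \<le> n" "s < Suc n"
  shows "Suc (((x - 1 + s) mod Suc n + Suc n - s) mod Suc n) = x"
proof (cases "x - 1 + s < Suc n")
  case True
  then have "(x - 1 + s) mod Suc n + Suc n - s = (x - 1) + Suc n" by simp
  moreover have "((x - 1) + Suc n) mod Suc n = x - 1" by (simp only: mod_add_self2) (use assms in simp)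
  ultimately show ?thesis using assms by simp
next
  case False
  then have "(x - 1 + s) mod Suc n = x - 1 + s - Suc n" using assms by (simp add: le_mod_geq)
  then have "(x - 1 + s) mod Suc n + Suc n - s = x - 1" using False by simp
  then show ?thesis using assms by simp
qed

lemma mod_back2:
  assumes "v < Suc n" "s < Suc n"
  shows "(Suc ((v + Suc n - s) mod Suc n) - 1 + s) mod Suc n = v"
proof (cases "s \<le> v")
  case True
  have e: "v + Suc n - s = v - s + Suc n" using True by arith
  have "(v + Suc n - s) mod Suc n = (v - s + Suc n) mod Suc n" by (simp only: e)
  also have "\<dots> = (v - s) mod Suc n" by (rule mod_add_self2)
  also have "\<dots> = v - s" using assms by simp
  finally have m: "(v + Suc n - s) mod Suc n = v - s" .
  have "Suc (v - s) - 1 + s = v" using True by arith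
  then show ?thesis unfolding m using assms by simp
next
  case False
  have m: "(v + Suc n - s) mod Suc n = v + Suc n - s" using False by simp
  have e: "Suc (v + Suc n - s) - 1 + s = v + Suc n" using False assms by arith
  have "(v + Suc n) mod Suc n = v" by (simp only: mod_add_self2) (use assms in simp)
  then show ?thesis unfolding m e .
qed

lemma rot_unrot:
  assumes "\<forall>x\<in>set a. 1 \<le> x \<and> x \<le> n" "s < Suc n"
  shows "rot n s (unrot n s a) = a"
  unfolding rot_def unrot_def map_map
proof (rule map_idI)
  fix x assume "x \<in> set a"
  then show "((\<lambda>v. Suc ((v + Suc n - s) mod Suc n)) \<circ> (\<lambda>x. (x - 1 + s) mod Suc n)) x = x"
    unfolding comp_def using assms by (intro mod_back1) auto
qed

lemma unrot_rot:
  assumes "\<forall>v\<in>set b. v < Suc n" "s < Suc n"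
  shows "unrot n s (rot n s b) = b"
  unfolding rot_def unrot_def map_map
proof (rule map_idI)
  fix x assume "x \<in> set b"
  then show "((\<lambda>x. (x - 1 + s) mod Suc n) \<circ> (\<lambda>v. Suc ((v + Suc n - s) mod Suc n))) x = x"
    unfolding comp_def using assms by (intro mod_back2) auto
qed


definition invl :: "(nat \<Rightarrow> nat) \<Rightarrow> nat \<Rightarrow> nat list \<Rightarrow> bool" where
  "invl \<sigma> n x \<longleftrightarrow> (\<forall>i<n. x ! (\<sigma> i) = x ! i)"

definition Bset :: "nat \<Rightarrow> (nat \<Rightarrow> nat) \<Rightarrow> nat list set" where
  "Bset n \<sigma> = {b. length b = n \<and> (\<forall>v\<in>set b. v < Suc n) \<and> invl \<sigma> n b}"

definition Inv :: "nat \<Rightarrow> (nat \<Rightarrow> nat) \<Rightarrow> nat list set" where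
  "Inv n \<sigma> = {a \<in> parking n. invl \<sigma> n a}"

lemma pf_char_Inv: "pf_char n \<sigma> = card (Inv n \<sigma>)"
  by (simp add: pf_char_def Inv_def invl_def)

lemma invl_map:
  assumes "\<sigma> permutes {..<n}" "length x = n" "invl \<sigma> n x"
  shows "invl \<sigma> n (map f x)"
proof -
  have "\<sigma> i < n" if "i < n" for i using permutes_in_image[OF assms(1)] that by simp
  then show ?thesis using assms by (simp add: invl_def)
qed

lemma length_rot [simp]: "length (rot n s b) = length b" by (simp add: rot_def)
lemma length_unrot [simp]: "length (unrot n s b) = length b" by (simp add: unrot_def)

lemma card_Bset_Inv:
  assumes \<sigma>: "\<sigma> permutes {..<n}"
  shows "card (Bset n \<sigma>) = card (Inv n \<sigma>) * Suc n"
proof -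
  define S where "S b = (THE s. s < Suc n \<and> rot n s b \<in> parking n)" for b
  have U: "\<exists>!s. s < Suc n \<and> rot n s b \<in> parking n" if "b \<in> Bset n \<sigma>" for b
    using that by (intro unique_rot) (auto simp: Bset_def)
  have S: "S b < Suc n \<and> rot n (S b) b \<in> parking n" if "b \<in> Bset n \<sigma>" for b
    unfolding S_def by (rule theI'[OF U[OF that]])
  have Suniq: "S b = s" if "b \<in> Bset n \<sigma>" "s < Suc n" "rot n s b \<in> parking n" for b s
    unfolding S_def by (rule the1_equality[OF U[OF that(1)]]) (use that in simp)
  have vals_unrot: "\<forall>v\<in>set (unrot n s a). v < Suc n" for s a by (auto simp: unrot_def)
  have bij: "bij_betw (\<lambda>x. unrot n (snd x) (fst x)) (Inv n \<sigma> \<times> {..<Suc n}) (Bset n \<sigma>)"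
  proof (rule bij_betw_byWitness[where f'="\<lambda>b. (rot n (S b) b, S b)"])
    show "\<forall>x\<in>Inv n \<sigma> \<times> {..<Suc n}. (rot n (S (unrot n (snd x) (fst x))) (unrot n (snd x) (fst x)), S (unrot n (snd x) (fst x))) = x"
    proof
      fix x assume x: "x \<in> Inv n \<sigma> \<times> {..<Suc n}"
      then obtain a s where as: "x = (a, s)" "a \<in> parking n" "invl \<sigma> n a" "s < Suc n" by (auto simp: Inv_def)
      have bnd: "\<forall>y\<in>set a. 1 \<le> y \<and> y \<le> n" using parking_bounds[OF as(2)] by force
      have len: "length a = n" using as(2) by (simp add: parking_def)
      have ra: "rot n s (unrot n s a) = a" by (rule rot_unrot[OF bnd as(4)])
      have bB: "unrot n s a \<in> Bset n \<sigma>"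
        using invl_map[OF \<sigma> len as(3)] len vals_unrot by (simp add: Bset_def unrot_def)
      have "S (unrot n s a) = s" by (rule Suniq[OF bB as(4)]) (simp add: ra as(2))
      then show "(rot n (S (unrot n (snd x) (fst x))) (unrot n (snd x) (fst x)), S (unrot n (snd x) (fst x))) = x"
        by (simp add: as(1) ra)
    qed
    show "\<forall>b\<in>Bset n \<sigma>. unrot n (snd (rot n (S b) b, S b)) (fst (rot n (S b) b, S b)) = b"
      using S unrot_rot by (auto simp: Bset_def)
    show "(\<lambda>x. unrot n (snd x) (fst x)) ` (Inv n \<sigma> \<times> {..<Suc n}) \<subseteq> Bset n \<sigma>"
    proof
      fix b assume "b \<in> (\<lambda>x. unrot n (snd x) (fst x)) ` (Inv n \<sigma> \<times> {..<Suc n})"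
      then obtain a s where as: "b = unrot n s a" "a \<in> parking n" "invl \<sigma> n a" by (auto simp: Inv_def)
      have len: "length a = n" using as(2) by (simp add: parking_def)
      show "b \<in> Bset n \<sigma>"
        using invl_map[OF \<sigma> len as(3)] len vals_unrot as(1) by (simp add: Bset_def unrot_def)
    qed
    show "(\<lambda>b. (rot n (S b) b, S b)) ` Bset n \<sigma> \<subseteq> Inv n \<sigma> \<times> {..<Suc n}"
    proof
      fix x assume "x \<in> (\<lambda>b. (rot n (S b) b, S b)) ` Bset n \<sigma>"
      then obtain b where b: "b \<in> Bset n \<sigma>" "x = (rot n (S b) b, S b)" by auto
      have "invl \<sigma> n (rot n (S b) b)" using b(1) invl_map[OF \<sigma>] by (auto simp: Bset_def rot_def)
      then show "x \<in> Inv n \<sigma> \<times> {..<Suc n}" using S[OF b(1)] b(2) by (auto simp: Inv_def)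
    qed
  qed
  have "card (Bset n \<sigma>) = card (Inv n \<sigma> \<times> {..<Suc n})" using bij_betw_same_card[OF bij] by simp
  also have "\<dots> = card (Inv n \<sigma>) * Suc n"
  proof (cases "finite (Inv n \<sigma>)")
    case True then show ?thesis by (simp add: card_cartesian_product)
  next
    case False
    have "Inv n \<sigma> \<subseteq> {a. set a \<subseteq> {..n} \<and> length a = n}"
      using parking_bounds by (auto simp: Inv_def parking_def)
    moreover have "finite {a. set a \<subseteq> {..n} \<and> length a = n}" by (rule finite_lists_length_eq) simp
    ultimately show ?thesis using False finite_subset by blast
  qed
  finally show ?thesis .
qed

lemma invl_funpow:
  assumes \<sigma>: "\<sigma> permutes {..<n}" and b: "invl \<sigma> n b" and i: "i < n"
  shows "b ! ((\<sigma> ^^ k) i) = b ! i \<and> (\<sigma> ^^ k) i < n"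
proof (induction k)
  case 0 then show ?case using i by simp
next
  case (Suc k)
  then show ?case using b permutes_in_image[OF \<sigma>] by (auto simp: invl_def)
qed

lemma card_Bset:
  assumes \<sigma>: "\<sigma> permutes {..<n}"
  shows "card (Bset n \<sigma>) = Suc n ^ card (cycs \<sigma> {..<n})"
proof -
  let ?Cs = "cycs \<sigma> {..<n}"
  define \<Phi> where "\<Phi> f = map (\<lambda>i. f (cyc \<sigma> i)) [0..<n]" for f :: "nat set \<Rightarrow> nat"
  have fin: "finite {..<n}" by simp
  have cycstep: "cyc \<sigma> (\<sigma> i) = cyc \<sigma> i" for i by (rule cyc_step[OF \<sigma> fin])
  have inj: "inj_on \<Phi> (PiE ?Cs (\<lambda>_. {..<n + 1}))"
  proof
    fix f g assume f: "f \<in> PiE ?Cs (\<lambda>_. {..<n + 1})" and g: "g \<in> PiE ?Cs (\<lambda>_. {..<n + 1})" and e: "\<Phi> f = \<Phi> g"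
    show "f = g"
    proof (rule PiE_ext[OF f g])
      fix C assume "C \<in> ?Cs"
      then obtain i where i: "i < n" "C = cyc \<sigma> i" by (auto simp: cycs_def)
      have "\<Phi> f ! i = \<Phi> g ! i" using e by simp
      then show "f C = g C" using i by (simp add: \<Phi>_def)
    qed
  qed
  have img: "\<Phi> ` PiE ?Cs (\<lambda>_. {..<n + 1}) = Bset n \<sigma>"
  proof
    show "\<Phi> ` PiE ?Cs (\<lambda>_. {..<n + 1}) \<subseteq> Bset n \<sigma>"
    proof
      fix b assume "b \<in> \<Phi> ` PiE ?Cs (\<lambda>_. {..<n + 1})"
      then obtain f where f: "f \<in> PiE ?Cs (\<lambda>_. {..<n + 1})" and b: "b = \<Phi> f" by auto
      have fv: "f (cyc \<sigma> i) < Suc n" if "i < n" for i using f that by (auto simp: cycs_def PiE_iff)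
      have "\<sigma> i < n" if "i < n" for i using permutes_in_image[OF \<sigma>] that by simp
      then have "invl \<sigma> n b" by (simp add: invl_def b \<Phi>_def cycstep)
      moreover have "\<forall>v\<in>set b. v < Suc n" using fv by (auto simp: b \<Phi>_def)
      ultimately show "b \<in> Bset n \<sigma>" by (simp add: Bset_def b \<Phi>_def)
    qed
  next
    show "Bset n \<sigma> \<subseteq> \<Phi> ` PiE ?Cs (\<lambda>_. {..<n + 1})"
    proof
      fix b assume b: "b \<in> Bset n \<sigma>"
      define rep where "rep C = (SOME i. i < n \<and> C = cyc \<sigma> i)" for C
      define f where "f = restrict (\<lambda>C. b ! rep C) ?Cs"
      have rep: "rep (cyc \<sigma> i) < n \<and> cyc \<sigma> i = cyc \<sigma> (rep (cyc \<sigma> i))" if "i < n" for i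
        unfolding rep_def by (rule someI[of _ i]) (use that in auto)
      have brep: "b ! rep (cyc \<sigma> i) = b ! i" if i: "i < n" for i
      proof -
        have "rep (cyc \<sigma> i) \<in> cyc \<sigma> (rep (cyc \<sigma> i))" by (rule self_in_cyc)
        then have "rep (cyc \<sigma> i) \<in> cyc \<sigma> i" using rep[OF i] by simp
        then obtain k where "rep (cyc \<sigma> i) = (\<sigma> ^^ k) i" by (auto simp: cyc_def)
        then show ?thesis using invl_funpow[OF \<sigma> _ i, of b k] b by (auto simp: Bset_def)
      qed
      have len: "length b = n" using b by (simp add: Bset_def)
      have "f \<in> PiE ?Cs (\<lambda>_. {..<n + 1})"
      proof -
        have "b ! rep C < n + 1" if "C \<in> ?Cs" for C
        proof -
          obtain i where i: "i < n" "C = cyc \<sigma> i" using \<open>C \<in> ?Cs\<close> by (auto simp: cycs_def)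
          have "b ! i \<in> set b" using i len by simp
          then show ?thesis using i brep b by (auto simp: Bset_def)
        qed
        then show ?thesis by (auto simp: f_def)
      qed
      moreover have "\<Phi> f = b"
      proof (rule nth_equalityI)
        show "length (\<Phi> f) = length b" using len by (simp add: \<Phi>_def)
        fix i assume "i < length (\<Phi> f)"
        then have i: "i < n" by (simp add: \<Phi>_def)
        have "cyc \<sigma> i \<in> ?Cs" using i by (auto simp: cycs_def)
        then show "\<Phi> f ! i = b ! i" using i brep by (simp add: \<Phi>_def f_def)
      qed
      ultimately show "b \<in> \<Phi> ` PiE ?Cs (\<lambda>_. {..<n + 1})" by blast
    qed
  qed
  have "card (Bset n \<sigma>) = card (PiE ?Cs (\<lambda>_. {..<n + 1}))" using card_image[OF inj] img by simp
  also have "\<dots> = Suc n ^ card ?Cs" by (simp add: card_PiE finite_cycs)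
  finally show ?thesis .
qed

lemma pf_char_formula:
  assumes "\<sigma> permutes {..<n}"
  shows "pf_char n \<sigma> * Suc n = Suc n ^ card (cycs \<sigma> {..<n})"
  using card_Bset_Inv[OF assms] card_Bset[OF assms] pf_char_Inv by simp


lemma pmon_add_mset: "pmon (add_mset k M) = psum k * pmon M"
  using pmon_add[of "{#k#}" M] by (simp add: psum_def)

lemma prod_gc:
  assumes "finite X"
  shows "(\<Prod>C\<in>X. gc c (card C)) = sc (if \<forall>C\<in>X. odd (card C) then c ^ card X else 0) * pmon (image_mset card (mset_set X))"
  using assms
proof (induction X rule: finite_induct)
  case empty then show ?case by simp
next
  case (insert C X)
  have m: "image_mset card (mset_set (insert C X)) = add_mset (card C) (image_mset card (mset_set X))"
    using insert by simp
  show ?case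
  proof (cases "odd (card C)")
    case True
    have "(\<Prod>D\<in>insert C X. gc c (card D)) = sc c * psum (card C) * (sc (if \<forall>D\<in>X. odd (card D) then c ^ card X else 0) * pmon (image_mset card (mset_set X)))"
      using insert True by (simp add: gc_def)
    also have "\<dots> = sc (c * (if \<forall>D\<in>X. odd (card D) then c ^ card X else 0)) * (psum (card C) * pmon (image_mset card (mset_set X)))"
      by (simp add: sc_mult[symmetric] ac_simps)
    also have "\<dots> = sc (if \<forall>D\<in>insert C X. odd (card D) then c ^ card (insert C X) else 0) * pmon (image_mset card (mset_set (insert C X)))"
      using insert True by (simp add: m pmon_add_mset)
    finally show ?thesis .
  next
    case False
    then show ?thesis using insert by (simp add: gc_def)
  qed
qed

lemma cycle_type_cycs: "cycle_type n \<sigma> = image_mset card (mset_set (cycs \<sigma> {..<n}))"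
proof -
  have "{cyc \<sigma> i |i. i < n} = cycs \<sigma> {..<n}" by (auto simp: cycs_def)
  then show ?thesis by (simp add: cycle_type_def)
qed

lemma wsh_cycs:
  assumes "finite X"
  shows "wsh (image_mset card (mset_set X)) = (if \<forall>C\<in>X. odd (card C) then 2 ^ card X else 0)"
  using assms by (simp add: wsh_def)

lemma term_eq:
  assumes \<sigma>: "\<sigma> permutes {..<m}"
  shows "sc (1 / of_nat (Suc m)) * wt (gc (2 * of_nat (Suc m))) \<sigma> {..<m}
       = sc (of_nat (pf_char m \<sigma>)) * shiftify (pmon (cycle_type m \<sigma>))"
proof -
  let ?X = "cycs \<sigma> {..<m}"
  let ?N = "card ?X"
  let ?M = "image_mset card (mset_set ?X)"
  have fX: "finite ?X" by (simp add: finite_cycs)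
  have pf: "of_nat (pf_char m \<sigma>) * of_nat (Suc m) = (of_nat (Suc m) ^ ?N :: rat)"
    using arg_cong[OF pf_char_formula[OF \<sigma>], of "of_nat :: nat \<Rightarrow> rat"] by (simp only: of_nat_mult of_nat_power)
  have pf': "of_nat (pf_char m \<sigma>) = (of_nat (Suc m) ^ ?N / of_nat (Suc m) :: rat)"
    using pf by (simp add: field_simps algebra_simps)
  have "sc (1 / of_nat (Suc m)) * wt (gc (2 * of_nat (Suc m))) \<sigma> {..<m}
      = sc (1 / of_nat (Suc m) * (if \<forall>C\<in>?X. odd (card C) then (2 * of_nat (Suc m)) ^ ?N else 0)) * pmon ?M"
    by (simp add: wt_def prod_gc[OF fX] sc_mult mult.assoc[symmetric])
  also have "\<dots> = sc (of_nat (pf_char m \<sigma>) * (if \<forall>C\<in>?X. odd (card C) then 2 ^ ?N else 0)) * pmon ?M"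
  proof -
    have key: "1 / of_nat (Suc m) * (if \<forall>C\<in>?X. odd (card C) then (2 * of_nat (Suc m)) ^ ?N else 0)
        = of_nat (pf_char m \<sigma>) * (if \<forall>C\<in>?X. odd (card C) then 2 ^ ?N else (0::rat))"
    proof (cases "\<forall>C\<in>?X. odd (card C)")
      case True
      then show ?thesis by (simp only: if_True power_mult_distrib pf') simp
    next
      case False
      show ?thesis by (simp only: if_not_P[OF False])
    qed
    show ?thesis by (simp only: key)
  qed
  also have "\<dots> = sc (of_nat (pf_char m \<sigma>)) * shiftify (pmon (cycle_type m \<sigma>))"
    by (simp add: shiftify_pmon cycle_type_cycs wsh_cycs[OF fX] sc_mult[symmetric] mult.assoc)
  finally show ?thesis .
qed

lemma SH_eq: "SH m = sc (1 / of_nat (Suc m)) * Zc (2 * of_nat (Suc m)) m"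
proof -
  have "SH m = sc (1 / fact m) * (\<Sum>\<sigma> | \<sigma> permutes {..<m}. sc (of_nat (pf_char m \<sigma>)) * shiftify (pmon (cycle_type m \<sigma>)))"
    by (simp add: SH_def PF_def shiftify_sc shiftify_sum)
  also have "(\<Sum>\<sigma> | \<sigma> permutes {..<m}. sc (of_nat (pf_char m \<sigma>)) * shiftify (pmon (cycle_type m \<sigma>)))
      = (\<Sum>\<sigma> | \<sigma> permutes {..<m}. sc (1 / of_nat (Suc m)) * wt (gc (2 * of_nat (Suc m))) \<sigma> {..<m})"
  proof (rule sum.cong[OF refl])
    fix \<sigma> assume "\<sigma> \<in> {\<sigma>. \<sigma> permutes {..<m}}"
    then show "sc (of_nat (pf_char m \<sigma>)) * shiftify (pmon (cycle_type m \<sigma>)) = sc (1 / of_nat (Suc m)) * wt (gc (2 * of_nat (Suc m))) \<sigma> {..<m}"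
      using term_eq[of \<sigma> m] by simp
  qed
  also have "(\<Sum>\<sigma> | \<sigma> permutes {..<m}. sc (1 / of_nat (Suc m)) * wt (gc (2 * of_nat (Suc m))) \<sigma> {..<m})
      = sc (1 / of_nat (Suc m)) * Sw (gc (2 * of_nat (Suc m))) {..<m}"
    unfolding Sw_def by (rule sum_distrib_left[symmetric])
  also have "sc (1 / fact m) * (sc (1 / of_nat (Suc m)) * Sw (gc (2 * of_nat (Suc m))) {..<m}) = sc (1 / of_nat (Suc m)) * Zc (2 * of_nat (Suc m)) m"
    by (simp only: Zc_def mult.left_commute)
  finally show ?thesis .
qed


theorem lemma2p3:
  fixes F G :: "symf fps"
  defines "F \<equiv> Abs_fps (\<lambda>m. if m = 0 then 0 else SH (m - 1))"
      and "G \<equiv> fps_X * (K_fps oo (- fps_X))"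
  shows "G oo F = fps_X \<and> F oo G = fps_X"
proof -
  have K: "K_fps = Zf 2" by (rule fps_ext) (simp add: K_fps_def K_coeff_eq)
  have psi: "K_fps oo (- fps_X) = Zf (- 2)" by (simp add: K Zf_compose_neg)
  have pp: "Zf 2 * Zf (- 2) = 1" by (simp add: Zf_mult Zf_zero)
  have Gdef: "G = fps_X * Zf (- 2)" by (simp add: G_def psi)
  have G0: "G $ 0 = 0" by (simp add: Gdef)
  have G1: "G $ 1 = 1" by (simp add: Gdef)
  obtain H where H0: "H $ 0 = 0" and HG: "H oo G = fps_X" using left_inverse_exists[OF G0 G1] by blast
  have HF: "H = F"
  proof (rule fps_ext)
    fix n show "H $ n = F $ n"
    proof (cases n)
      case 0 then show ?thesis by (simp add: H0 F_def)
    next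
      case (Suc m)
      have "of_nat (Suc m) * H $ Suc m = (Zf 2 ^ Suc m) $ m"
        by (rule lagrange[OF pp H0]) (use HG in \<open>simp only: Gdef\<close>)
      also have "\<dots> = Zc (2 * of_nat (Suc m)) m" by (simp only: Zf_power Zf_nth mult.commute)
      finally have e: "of_nat (Suc m) * H $ Suc m = Zc (2 * of_nat (Suc m)) m" .
      have "H $ Suc m = sc (1 / of_nat (Suc m)) * (of_nat (Suc m) * H $ Suc m)"
        by (rule sc_inv_cancel[symmetric]) simp
      also have "\<dots> = SH m" by (simp only: e SH_eq)
      finally show ?thesis by (simp add: F_def Suc)
    qed
  qed
  have FG: "F oo G = fps_X" using HG HF by simp
  have F0: "F $ 0 = 0" by (simp add: F_def)
  have F1: "F $ 1 = 1" by (simp add: F_def SH_eq)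
  obtain M where M0: "M $ 0 = 0" and MF: "M oo F = fps_X" using left_inverse_exists[OF F0 F1] by blast
  have "G = fps_X oo G" by (simp add: G0)
  also have "\<dots> = (M oo F) oo G" by (simp add: MF)
  also have "\<dots> = M oo (F oo G)" by (rule fps_compose_assoc[symmetric, OF G0 F0])
  also have "\<dots> = M" by (simp add: FG)
  finally have GM: "G = M" .
  show ?thesis using MF FG GM by simp
qed


end
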